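(* Let $X$ be a Banach space, $\alpha$ a left tensorial norm on $\ell_\infty\otimes X$, and let $L$, $J$ be a Banach lattice and linear isometry $J\colon X\to L$ such that $\|\bigvee_{j=1}^k|Jy_j|\|=\alpha(\sum_{j=1}^k e_j\otimes y_j)$ for all $k$ and $y_1,\dots,y_k\in X$. Let $\alpha^*$ be the dual norm on $(\ell_\infty\otimes_\alpha X)^*$, where an operator $S\colon X\to\ell_1$ acts on $\ell_\infty\otimes X$ by $\langle S,\sum_j h_j\otimes x_j\rangle=\sum_j\langle h_j,Sx_j\rangle$. Then every bounded operator $T\colon J(X)\to\ell_1$ with $TJ\in(\ell_\infty\otimes_\alpha X)^*$ admits an extension $\tilde T\colon L\to\ell_1$ such that $\tilde T^*\colon\ell_\infty\to L^*$ is order bounded with $\|\tilde T^*\|_m=\alpha^*(TJ)$.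
   Context: All spaces are real. $(e_j)$ is the unit vector basis of $c_0\subseteq\ell_\infty$; $\ell_\infty\otimes_\alpha X$ is the completion of $\ell_\infty\otimes X$ under $\alpha$. A norm $\alpha$ on $Y\otimes X$ is left tensorial if $\alpha(y\otimes x)=\|y\|\|x\|$ and $\|T\otimes I_X\|\le\|T\|$ on $(Y\otimes X,\alpha)$ for every bounded $T\colon Y\to Y$. An operator $S$ from a Banach space $Y$ to a Banach lattice $M$ is order bounded if there is $z\in M$, $z\ge0$, with $|Sy|\le\|y\|z$ for all $y\in Y$; $\|S\|_m$ is the infimum of $\|z\|$ over such $z$. *)

theory Defs
  imports "HOL-Analysis.Analysis"
begin

class banach_lattice = banach + ordered_real_vector + lattice +
  assumes lattice_norm: "sup x (- x) \<le> sup y (- y) \<Longrightarrow> norm x \<le> norm y"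

definition labs :: "'a::banach_lattice \<Rightarrow> 'a" where
  "labs x = sup x (- x)"

definition dual_space :: "('l::banach_lattice \<Rightarrow> real) set" where
  "dual_space = {z. bounded_linear z}"

definition dual_le :: "('l::banach_lattice \<Rightarrow> real) \<Rightarrow> ('l \<Rightarrow> real) \<Rightarrow> bool" where
  "dual_le \<phi> \<psi> \<longleftrightarrow> (\<forall>w. 0 \<le> w \<longrightarrow> \<phi> w \<le> \<psi> w)"

text \<open>Modulus in L* (Riesz-Kantorovich formula): for w \<ge> 0,
  |\<phi>|(w) = sup { \<phi> v : |v| \<le> w }, extended by |\<phi>|(w) = |\<phi>|(w+) - |\<phi>|(w-).\<close>
definition dual_abs_pos :: "('l::banach_lattice \<Rightarrow> real) \<Rightarrow> 'l \<Rightarrow> real" where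
  "dual_abs_pos \<phi> w = Sup {\<phi> v | v. labs v \<le> w}"

definition dual_abs :: "('l::banach_lattice \<Rightarrow> real) \<Rightarrow> 'l \<Rightarrow> real" where
  "dual_abs \<phi> w = dual_abs_pos \<phi> (sup w 0) - dual_abs_pos \<phi> (sup (- w) 0)"

definition dual_ob_majorant :: "('y::real_normed_vector \<Rightarrow> 'l::banach_lattice \<Rightarrow> real) \<Rightarrow> ('l \<Rightarrow> real) \<Rightarrow> bool" where
  "dual_ob_majorant S z \<longleftrightarrow> z \<in> dual_space \<and> dual_le (\<lambda>_. 0) z \<and>
      (\<forall>y. dual_le (dual_abs (S y)) (\<lambda>w. norm y * z w))"

definition dual_order_bounded :: "('y::real_normed_vector \<Rightarrow> 'l::banach_lattice \<Rightarrow> real) \<Rightarrow> bool" where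
  "dual_order_bounded S \<longleftrightarrow> (\<exists>z. dual_ob_majorant S z)"

definition dual_mnorm :: "('y::real_normed_vector \<Rightarrow> 'l::banach_lattice \<Rightarrow> real) \<Rightarrow> real" where
  "dual_mnorm S = Inf {onorm z | z. dual_ob_majorant S z}"

text \<open>\<ell>_inf is the Banach space of bounded (continuous, nat being discrete) functions
  nat \<Rightarrow> real with the sup norm. The unit vector e_j (indices start at 0).\<close>
type_synonym linf = "nat \<Rightarrow>\<^sub>C real"

definition unit_vec :: "nat \<Rightarrow> linf" where
  "unit_vec j = Bcontfun (\<lambda>n. if n = j then 1 else 0)"

text \<open>\<ell>_1 is represented by absolutely summable sequences nat \<Rightarrow> real.\<close>
definition l1norm :: "(nat \<Rightarrow> real) \<Rightarrow> real" where
  "l1norm f = (\<Sum>n. \<bar>f n\<bar>)"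

definition l1_op :: "'a::real_normed_vector set \<Rightarrow> ('a \<Rightarrow> nat \<Rightarrow> real) \<Rightarrow> bool" where
  "l1_op A T \<longleftrightarrow>
     (\<forall>u\<in>A. summable (\<lambda>n. \<bar>T u n\<bar>)) \<and>
     (\<forall>u\<in>A. \<forall>v\<in>A. \<forall>a b. T (a *\<^sub>R u + b *\<^sub>R v) = (\<lambda>n. a * T u n + b * T v n)) \<and>
     (\<exists>C. \<forall>u\<in>A. l1norm (T u) \<le> C * norm u)"

definition l1_adjoint :: "('l \<Rightarrow> nat \<Rightarrow> real) \<Rightarrow> linf \<Rightarrow> 'l \<Rightarrow> real" where
  "l1_adjoint S h = (\<lambda>z. \<Sum>n. apply_bcontfun h n * S z n)"

text \<open>A tensor \<Sum>_j h_j \<otimes> x_j is given by a list of pairs (h_j, x_j); it is identified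
  with its image under the (injective) canonical map \<ell>_inf \<otimes> X \<rightarrow> \<ell>_inf(X),
  namely the sequence n \<mapsto> \<Sum>_j h_j(n) x_j.\<close>
definition tensor :: "(linf \<times> 'x::real_vector) list \<Rightarrow> nat \<Rightarrow> 'x" where
  "tensor l = (\<lambda>n. \<Sum>(h, x)\<leftarrow>l. apply_bcontfun h n *\<^sub>R x)"

definition tensors :: "(nat \<Rightarrow> 'x::real_vector) set" where
  "tensors = range tensor"

definition tensor_norm :: "((nat \<Rightarrow> 'x::real_normed_vector) \<Rightarrow> real) \<Rightarrow> bool" where
  "tensor_norm \<alpha> \<longleftrightarrow>
     (\<forall>u\<in>tensors. 0 \<le> \<alpha> u \<and> (\<alpha> u = 0 \<longleftrightarrow> u = (\<lambda>_. 0))) \<and>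
     (\<forall>u\<in>tensors. \<forall>v\<in>tensors. \<alpha> (\<lambda>n. u n + v n) \<le> \<alpha> u + \<alpha> v) \<and>
     (\<forall>u\<in>tensors. \<forall>c. \<alpha> (\<lambda>n. c *\<^sub>R u n) = \<bar>c\<bar> * \<alpha> u)"

definition left_tensorial :: "((nat \<Rightarrow> 'x::real_normed_vector) \<Rightarrow> real) \<Rightarrow> bool" where
  "left_tensorial \<alpha> \<longleftrightarrow> tensor_norm \<alpha> \<and>
     (\<forall>h x. \<alpha> (tensor [(h, x)]) = norm h * norm x) \<and>
     (\<forall>T :: linf \<Rightarrow> linf. bounded_linear T \<longrightarrow>
        (\<forall>l. \<alpha> (tensor (map (\<lambda>(h, x). (T h, x)) l)) \<le> onorm T * \<alpha> (tensor l)))"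

definition tpair :: "('x \<Rightarrow> nat \<Rightarrow> real) \<Rightarrow> (linf \<times> 'x) list \<Rightarrow> real" where
  "tpair S l = (\<Sum>(h, x)\<leftarrow>l. \<Sum>n. apply_bcontfun h n * S x n)"

definition in_alpha_dual :: "((nat \<Rightarrow> 'x::real_normed_vector) \<Rightarrow> real) \<Rightarrow> ('x \<Rightarrow> nat \<Rightarrow> real) \<Rightarrow> bool" where
  "in_alpha_dual \<alpha> S \<longleftrightarrow> (\<exists>C. \<forall>l. \<bar>tpair S l\<bar> \<le> C * \<alpha> (tensor l))"

definition alpha_dual :: "((nat \<Rightarrow> 'x::real_normed_vector) \<Rightarrow> real) \<Rightarrow> ('x \<Rightarrow> nat \<Rightarrow> real) \<Rightarrow> real" where
  "alpha_dual \<alpha> S = Sup {\<bar>tpair S l\<bar> | l. \<alpha> (tensor l) \<le> 1}"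

end

theory Submission
  imports Defs
begin


lemma labs_le_iff: "labs (v::'l::banach_lattice) \<le> w \<longleftrightarrow> - w \<le> v \<and> v \<le> w"
  unfolding labs_def by (metis le_sup_iff minus_le_iff)

lemma labs_zero[simp]: "labs (0::'l::banach_lattice) = 0"
  unfolding labs_def by simp

lemma labs_minus[simp]: "labs (- v::'l::banach_lattice) = labs v"
  unfolding labs_def by (simp add: sup_commute)

lemma ge_labs: "(v::'l::banach_lattice) \<le> labs v" "- v \<le> labs v" "- labs v \<le> v"
  unfolding labs_def by (auto intro: le_supI1 le_supI2 simp: sup_commute) (metis minus_le_iff sup_commute sup_ge1)

lemma labs_nonneg: "0 \<le> labs (v::'l::banach_lattice)"
proof -
  have "0 = v + - v" by simp
  also have "\<dots> \<le> labs v + labs v" using ge_labs[of v] by (intro add_mono)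
  finally have h: "0 \<le> labs v + labs v" .
  have "0 \<le> (1/2::real) *\<^sub>R (labs v + labs v)" by (rule scaleR_nonneg_nonneg) (simp_all add: h)
  also have "(1/2::real) *\<^sub>R (labs v + labs v) = labs v"
    by (metis scaleR_half_double)
  finally show ?thesis .
qed

lemma labs_pos: "0 \<le> (w::'l::banach_lattice) \<Longrightarrow> labs w = w"
proof -
  assume w0: "0 \<le> w"
  have "- w \<le> 0" using w0 by simp
  then have "- w \<le> w" using w0 by (rule order_trans)
  then show ?thesis unfolding labs_def by (rule sup_absorb1)
qed

lemma labs_le_norm: "labs (v::'l::banach_lattice) \<le> w \<Longrightarrow> norm v \<le> norm w"
proof -
  assume a: "labs v \<le> w"
  have w0: "0 \<le> w" using labs_nonneg[of v] a by (rule order_trans)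
  have "labs v \<le> labs w" using a unfolding labs_pos[OF w0] .
  then show ?thesis unfolding labs_def by (rule lattice_norm)
qed

lemma norm_mono_pos: "0 \<le> (a::'l::banach_lattice) \<Longrightarrow> a \<le> b \<Longrightarrow> norm a \<le> norm b"
proof -
  assume "0 \<le> a" "a \<le> b"
  then have "labs a \<le> b" using labs_pos[of a] by simp
  then show ?thesis by (rule labs_le_norm)
qed

lemma labs_le_zero: "labs (v::'l::banach_lattice) \<le> 0 \<Longrightarrow> v = 0"
proof -
  assume "labs v \<le> 0"
  then have "norm v \<le> norm (0::'l)" by (rule labs_le_norm)
  then show ?thesis by simp
qed

lemma norm_labs[simp]: "norm (labs (v::'l::banach_lattice)) = norm v"
proof -
  have "labs (labs v) \<le> labs v" using labs_pos[OF labs_nonneg[of v]] by simp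
  then have 1: "norm (labs v) \<le> norm v" using labs_le_norm[of "labs v" "labs v"] lattice_norm unfolding labs_def by blast
  have "norm v \<le> norm (labs v)" by (rule labs_le_norm) simp
  with 1 show ?thesis by (rule antisym)
qed

lemma labs_triangle: "labs ((a::'l::banach_lattice) + b) \<le> labs a + labs b"
proof -
  have "a + b \<le> labs a + labs b" using ge_labs(1)[of a] ge_labs(1)[of b] by (rule add_mono)
  moreover have "- labs a + - labs b \<le> a + b" using ge_labs(3)[of a] ge_labs(3)[of b] by (rule add_mono)
  moreover have "- (labs a + labs b) = - labs a + - labs b" by (rule minus_add_distrib)
  ultimately show ?thesis unfolding labs_le_iff by simp
qed

lemma norm_pos_part: "norm (sup (a::'l::banach_lattice) 0) \<le> norm a"
proof -
  have "sup a 0 \<le> labs a" using ge_labs(1)[of a] labs_nonneg[of a] by (rule sup_least)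
  then have "labs (sup a 0) \<le> labs a" by (simp add: labs_pos)
  then have "labs (sup a 0) \<le> labs (labs a)" using labs_pos[OF labs_nonneg[of a]] by simp
  then show ?thesis using lattice_norm[of "sup a 0" "labs a"] norm_labs[of a] unfolding labs_def by simp
qed

lemma labs_scale_le:
  assumes c1: "\<bar>c\<bar> \<le> 1" and vw0: "labs (v::'l::banach_lattice) \<le> w"
  shows "labs (c *\<^sub>R v) \<le> w"
proof -
  have w0: "0 \<le> w" using labs_nonneg[of v] vw0 by (rule order_trans)
  have vw: "- w \<le> v" "v \<le> w" using vw0 unfolding labs_le_iff by auto
  have cw: "\<bar>c\<bar> *\<^sub>R w \<le> 1 *\<^sub>R w"
    using c1 w0 by (rule scaleR_right_mono)
  then have cw: "\<bar>c\<bar> *\<^sub>R w \<le> w" by simp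
  have mcw: "- w \<le> - (\<bar>c\<bar> *\<^sub>R w)" using cw by (simp only: neg_le_iff_le)
  have mv: "- v \<le> w" using vw(1) by (simp only: minus_le_iff)
  have mv2: "- w \<le> - v" using vw(2) by (simp only: neg_le_iff_le)
  define d where "d = \<bar>c\<bar>"
  have d0: "0 \<le> d" unfolding d_def by simp
  obtain u where u: "c *\<^sub>R v = d *\<^sub>R u" "- w \<le> u" "u \<le> w"
  proof (cases "c \<ge> 0")
    case True
    then show ?thesis using that[of v] vw unfolding d_def by simp
  next
    case False
    then show ?thesis using that[of "- v"] mv mv2 unfolding d_def by simp
  qed
  have 1: "d *\<^sub>R u \<le> d *\<^sub>R w" using u(3) d0 by (rule scaleR_left_mono)
  have 2: "d *\<^sub>R (- w) \<le> d *\<^sub>R u" using u(2) d0 by (rule scaleR_left_mono)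
  have 3: "d *\<^sub>R u \<le> w" using 1 cw unfolding d_def by (rule order_trans)
  have "d *\<^sub>R (- w) = - (\<bar>c\<bar> *\<^sub>R w)" unfolding d_def by simp
  then have 4: "- w \<le> d *\<^sub>R u" using mcw 2 by (metis order_trans)
  show ?thesis unfolding labs_le_iff u(1) using 3 4 by (rule conjI[rotated])
qed

lemma riesz2:
  fixes y w1 w2 :: "'l::banach_lattice"
  assumes "0 \<le> w1" "0 \<le> w2" "- (w1 + w2) \<le> y" "y \<le> w1 + w2"
  shows "\<exists>y1 y2. y = y1 + y2 \<and> - w1 \<le> y1 \<and> y1 \<le> w1 \<and> - w2 \<le> y2 \<and> y2 \<le> w2"
proof -
  define y1 where "y1 = sup (inf y w1) (- w1)"
  have a: "- w1 \<le> y1" unfolding y1_def by (rule sup_ge2)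
  have "- w1 \<le> 0" using assms(1) by (simp only: neg_le_0_iff_le)
  then have "- w1 \<le> w1" using assms(1) by (rule order_trans)
  then have b: "y1 \<le> w1" unfolding y1_def by (rule sup_least[OF inf_le2])
  have "y - w2 \<le> y" using assms(2) by (simp only: diff_le_eq le_add_same_cancel1)
  moreover have "y - w2 \<le> w1" using assms(4) by (simp only: diff_le_eq)
  ultimately have "y - w2 \<le> inf y w1" by (rule le_infI)
  then have c: "y - w2 \<le> y1" unfolding y1_def using sup_ge1 by (rule order_trans)
  have yy: "y \<le> y + w2" using assms(2) by (rule le_add_same_cancel1[THEN iffD2])
  have "inf y w1 \<le> y + w2" using inf_le1 yy by (rule order_trans)
  moreover have "- w1 \<le> y + w2"
  proof -
    have "- (w1 + w2) + w2 \<le> y + w2" using assms(3) by (rule add_right_mono)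
    moreover have "- (w1 + w2) + w2 = - w1" by (simp add: algebra_simps)
    ultimately show ?thesis by simp
  qed
  ultimately have d: "y1 \<le> y + w2" unfolding y1_def by (rule sup_least)
  have e: "- w2 \<le> y - y1"
  proof -
    have "y1 + (- w2 - y1) \<le> y + w2 + (- w2 - y1)" using d by (rule add_right_mono)
    moreover have "y1 + (- w2 - y1) = - w2" by (simp add: algebra_simps)
    moreover have "y + w2 + (- w2 - y1) = y - y1" by (simp add: algebra_simps)
    ultimately show ?thesis by simp
  qed
  have f: "y - y1 \<le> w2"
  proof -
    have "y - w2 + (w2 - y1) \<le> y1 + (w2 - y1)" using c by (rule add_right_mono)
    moreover have "y - w2 + (w2 - y1) = y - y1" by (simp add: algebra_simps)
    moreover have "y1 + (w2 - y1) = w2" by (simp add: algebra_simps)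
    ultimately show ?thesis by simp
  qed
  have g: "y = y1 + (y - y1)" by (simp add: algebra_simps)
  show ?thesis
    by (rule exI[of _ y1], rule exI[of _ "y - y1"]) (intro conjI g a b e f)
qed




section \<open>Hahn-Banach (algebraic, dominated extension)\<close>

definition hb_valid :: "'v::real_vector set \<Rightarrow> ('v \<Rightarrow> real) \<Rightarrow> 'v set \<Rightarrow> ('v \<Rightarrow> real) \<Rightarrow> ('v \<times> real) set \<Rightarrow> bool" where
  "hb_valid E p F f H \<longleftrightarrow>
     (\<forall>x a. (x, a) \<in> H \<longrightarrow> x \<in> E) \<and>
     (\<forall>x a. (x, a) \<in> H \<longrightarrow> a \<le> p x) \<and>
     (\<forall>x a y b. (x, a) \<in> H \<longrightarrow> (y, b) \<in> H \<longrightarrow> (x + y, a + b) \<in> H) \<and>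
     (\<forall>x a c. (x, a) \<in> H \<longrightarrow> (c *\<^sub>R x, c * a) \<in> H) \<and>
     (\<forall>x\<in>F. (x, f x) \<in> H)"

lemma hahn_banach:
  fixes p f :: "'v::real_vector \<Rightarrow> real"
  assumes E: "subspace E" and F: "subspace F" "F \<subseteq> E"
    and padd: "\<And>x y. x \<in> E \<Longrightarrow> y \<in> E \<Longrightarrow> p (x + y) \<le> p x + p y"
    and phom: "\<And>x c. x \<in> E \<Longrightarrow> c > 0 \<Longrightarrow> p (c *\<^sub>R x) \<le> c * p x"
    and fadd: "\<And>x y. x \<in> F \<Longrightarrow> y \<in> F \<Longrightarrow> f (x + y) = f x + f y"
    and fhom: "\<And>x c. x \<in> F \<Longrightarrow> f (c *\<^sub>R x) = c * f x"
    and fp: "\<And>x. x \<in> F \<Longrightarrow> f x \<le> p x"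
  shows "\<exists>g. (\<forall>x\<in>F. g x = f x) \<and> (\<forall>x\<in>E. g x \<le> p x) \<and>
           (\<forall>x\<in>E. \<forall>y\<in>E. g (x + y) = g x + g y) \<and> (\<forall>x\<in>E. \<forall>c. g (c *\<^sub>R x) = c * g x)"
proof -
  have p0: "p 0 = 0"
  proof -
    have "p 0 \<le> p 0 + p 0" using padd[of 0 0] E by (simp add: subspace_0)
    moreover have "p ((1/2) *\<^sub>R 0) \<le> (1/2) * p 0" using phom[of 0 "1/2"] E by (simp add: subspace_0)
    ultimately show ?thesis by simp
  qed
  define A where "A = {H. hb_valid E p F f H}"
  define H0 where "H0 = (\<lambda>x. (x, f x)) ` F"
  have H0: "H0 \<in> A"
    unfolding A_def hb_valid_def H0_def
    using F fp fadd fhom by (auto simp: subspace_def)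
  have "\<exists>M\<in>A. \<forall>X\<in>A. M \<subseteq> X \<longrightarrow> X = M"
  proof (rule Zorn_Lemma2, intro ballI)
    fix C assume C: "C \<in> chains A"
    show "\<exists>U\<in>A. \<forall>X\<in>C. X \<subseteq> U"
    proof (cases "C = {}")
      case True
      then show ?thesis using H0 by auto
    next
      case False
      then obtain H1 where H1: "H1 \<in> C" by auto
      have CA: "C \<subseteq> A" and ch: "\<And>X Y. X \<in> C \<Longrightarrow> Y \<in> C \<Longrightarrow> X \<subseteq> Y \<or> Y \<subseteq> X"
        using C unfolding chains_def chain_subset_def by auto
      have vC: "\<And>X. X \<in> C \<Longrightarrow> hb_valid E p F f X" using CA unfolding A_def by auto
      have "hb_valid E p F f (\<Union>C)"
        unfolding hb_valid_def
      proof (intro conjI allI impI ballI)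
        fix x a assume "(x, a) \<in> \<Union>C"
        then obtain X where "X \<in> C" "(x, a) \<in> X" by auto
        then show "x \<in> E" using vC unfolding hb_valid_def by blast
      next
        fix x a assume "(x, a) \<in> \<Union>C"
        then obtain X where "X \<in> C" "(x, a) \<in> X" by auto
        then show "a \<le> p x" using vC unfolding hb_valid_def by blast
      next
        fix x a y b assume "(x, a) \<in> \<Union>C" "(y, b) \<in> \<Union>C"
        then obtain X Y where XY: "X \<in> C" "(x, a) \<in> X" "Y \<in> C" "(y, b) \<in> Y" by auto
        show "(x + y, a + b) \<in> \<Union>C"
        proof (cases "X \<subseteq> Y")
          case True
          then have "(x + y, a + b) \<in> Y" using XY vC[of Y] unfolding hb_valid_def by blast
          then show ?thesis using XY by auto
        next
          case False
          then have "Y \<subseteq> X" using ch XY by blast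
          then have "(x + y, a + b) \<in> X" using XY vC[of X] unfolding hb_valid_def by blast
          then show ?thesis using XY by auto
        qed
      next
        fix x a c assume "(x, a) \<in> \<Union>C"
        then obtain X where "X \<in> C" "(x, a) \<in> X" by auto
        then show "(c *\<^sub>R x, c * a) \<in> \<Union>C" using vC unfolding hb_valid_def by blast
      next
        fix x assume "x \<in> F"
        then show "(x, f x) \<in> \<Union>C" using H1 vC unfolding hb_valid_def by blast
      qed
      then show ?thesis unfolding A_def by auto
    qed
  qed
  then obtain M where MA: "M \<in> A" and Mmax: "\<And>X. X \<in> A \<Longrightarrow> M \<subseteq> X \<Longrightarrow> X = M" by blast
  have vM: "hb_valid E p F f M" using MA unfolding A_def by simp
  have Mb: "\<And>x a. (x, a) \<in> M \<Longrightarrow> x \<in> E \<and> a \<le> p x"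
   and Madd: "\<And>x a y b. (x, a) \<in> M \<Longrightarrow> (y, b) \<in> M \<Longrightarrow> (x + y, a + b) \<in> M"
   and Mscale: "\<And>x a c. (x, a) \<in> M \<Longrightarrow> (c *\<^sub>R x, c * a) \<in> M"
   and MF: "\<And>x. x \<in> F \<Longrightarrow> (x, f x) \<in> M"
    using vM unfolding hb_valid_def by blast+
  have M00: "(0, 0) \<in> M"
    using Mscale[OF MF[OF subspace_0[OF F(1)]], of 0] by simp
  have Mfun: "a = b" if "(x, a) \<in> M" "(x, b) \<in> M" for x a b
  proof -
    have "(x + (-1) *\<^sub>R x, a + (-1) * b) \<in> M" using Madd[OF that(1) Mscale[OF that(2)]] .
    then have "a - b \<le> 0" using Mb p0 by fastforce
    moreover have "(x + (-1) *\<^sub>R x, b + (-1) * a) \<in> M" using Madd[OF that(2) Mscale[OF that(1)]] .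
    then have "b - a \<le> 0" using Mb p0 by fastforce
    ultimately show ?thesis by simp
  qed
  have Mtot: "\<exists>a. (x, a) \<in> M" if x0E: "x \<in> E" for x
  proof (rule ccontr)
    assume nx: "\<nexists>a. (x, a) \<in> M"
    define S where "S = {a - p (y - x) | y a. (y, a) \<in> M}"
    define c where "c = Sup S"
    have Sne: "S \<noteq> {}" using M00 unfolding S_def by blast
    have Sbd: "s \<le> p (y2 + x) - a2" if "s \<in> S" "(y2, a2) \<in> M" for s y2 a2
    proof -
      obtain y a where ya: "s = a - p (y - x)" "(y, a) \<in> M" using \<open>s \<in> S\<close> unfolding S_def by blast
      have "(y + y2, a + a2) \<in> M" using Madd ya(2) that(2) by blast
      then have "a + a2 \<le> p (y + y2)" using Mb by blast
      also have "p (y + y2) = p ((y - x) + (y2 + x))" by (simp add: algebra_simps)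
      also have "\<dots> \<le> p (y - x) + p (y2 + x)"
      proof -
        have "y - x \<in> E" "y2 + x \<in> E" using Mb ya(2) that(2) x0E E by (auto simp: subspace_diff subspace_add)
        from padd[OF this] show ?thesis .
      qed
      finally show ?thesis using ya(1) by simp
    qed
    have bddS: "bdd_above S" using Sbd[OF _ M00] by (intro bdd_aboveI[of _ "p (0 + x) - 0"]) blast
    have cge: "a - p (y - x) \<le> c" if "(y, a) \<in> M" for y a
      unfolding c_def using that bddS by (auto intro!: cSup_upper simp: S_def)
    have cle: "c \<le> p (y + x) - a" if "(y, a) \<in> M" for y a
      unfolding c_def using Sne Sbd[OF _ that] by (rule cSup_least)
    define M' where "M' = {(y + t *\<^sub>R x, a + t * c) | y a t. (y, a) \<in> M}"
    have M'I: "(y + t *\<^sub>R x, a + t * c) \<in> M'" if "(y, a) \<in> M" for y a t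
      unfolding M'_def using that by blast
    have vM': "hb_valid E p F f M'"
      unfolding hb_valid_def
    proof (intro conjI allI impI ballI)
      fix z b assume "(z, b) \<in> M'"
      then obtain y a t where zb: "z = y + t *\<^sub>R x" "b = a + t * c" "(y, a) \<in> M"
        unfolding M'_def by blast
      have yE: "y \<in> E" using Mb zb(3) by blast
      show "z \<in> E" using zb(1) yE x0E E by (simp add: subspace_add subspace_scale)
    next
      fix z b assume "(z, b) \<in> M'"
      then obtain y a t where zb: "z = y + t *\<^sub>R x" "b = a + t * c" "(y, a) \<in> M"
        unfolding M'_def by blast
      have yE: "y \<in> E" using Mb zb(3) by blast
      have "z \<in> E" using zb(1) yE x0E E by (simp add: subspace_add subspace_scale)
        consider "t = 0" | "t > 0" | "t < 0" by linarith
        then show "b \<le> p z"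
        proof cases
          case 1 then show ?thesis using zb Mb by simp
        next
          case 2
          have "((1/t) *\<^sub>R y, (1/t) * a) \<in> M" using Mscale zb(3) by blast
          then have "c \<le> p ((1/t) *\<^sub>R y + x) - (1/t) * a" by (rule cle)
          moreover have "(1/t) *\<^sub>R y + x = (1/t) *\<^sub>R z" using 2 zb(1) by (simp add: algebra_simps)
          moreover have "p ((1/t) *\<^sub>R z) \<le> (1/t) * p z"
            using phom[of z "1/t"] 2 \<open>z \<in> E\<close> by simp
          ultimately have "c \<le> (1/t) * p z - (1/t) * a" by (metis add_le_cancel_right diff_add_cancel order_trans)
          then have "t * c \<le> t * ((1/t) * p z - (1/t) * a)" using 2 by (simp add: mult_left_mono)
          then have "t * c \<le> p z - a" using 2 by (simp add: algebra_simps)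
          then show ?thesis using zb(2) by simp
        next
          case 3
          define s where "s = - t"
          have s0: "s > 0" using 3 s_def by simp
          have "((1/s) *\<^sub>R y, (1/s) * a) \<in> M" using Mscale zb(3) by blast
          then have "(1/s) * a - p ((1/s) *\<^sub>R y - x) \<le> c" by (rule cge)
          moreover have "(1/s) *\<^sub>R y - x = (1/s) *\<^sub>R z" using s0 zb(1) s_def by (simp add: algebra_simps)
          moreover have "p ((1/s) *\<^sub>R z) \<le> (1/s) * p z"
            using phom[of z "1/s"] s0 \<open>z \<in> E\<close> by simp
          ultimately have "(1/s) * a - (1/s) * p z \<le> c" by (metis diff_left_mono order_trans)
          then have "s * ((1/s) * a - (1/s) * p z) \<le> s * c" using s0 by (simp add: mult_left_mono)
          then have "a - p z \<le> s * c" using s0 by (simp add: algebra_simps)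
          then show ?thesis using zb(2) s_def by simp
        qed
    next
      fix z1 b1 z2 b2 assume "(z1, b1) \<in> M'" "(z2, b2) \<in> M'"
      then obtain y1 a1 t1 y2 a2 t2 where
        "z1 = y1 + t1 *\<^sub>R x" "b1 = a1 + t1 * c" "(y1, a1) \<in> M"
        "z2 = y2 + t2 *\<^sub>R x" "b2 = a2 + t2 * c" "(y2, a2) \<in> M"
        unfolding M'_def by blast
      moreover have "(y1 + y2, a1 + a2) \<in> M" using Madd calculation by blast
      moreover have "(z1 + z2, b1 + b2) = ((y1 + y2) + (t1 + t2) *\<^sub>R x, (a1 + a2) + (t1 + t2) * c)"
        using calculation by (simp add: algebra_simps)
      ultimately show "(z1 + z2, b1 + b2) \<in> M'" using M'I by metis
    next
      fix z b d assume "(z, b) \<in> M'"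
      then obtain y a t where zb: "z = y + t *\<^sub>R x" "b = a + t * c" "(y, a) \<in> M"
        unfolding M'_def by blast
      moreover have "(d *\<^sub>R y, d * a) \<in> M" using Mscale zb by blast
      moreover have "(d *\<^sub>R z, d * b) = (d *\<^sub>R y + (d * t) *\<^sub>R x, d * a + (d * t) * c)"
        using calculation by (simp add: algebra_simps)
      ultimately show "(d *\<^sub>R z, d * b) \<in> M'" using M'I by metis
    next
      fix z assume "z \<in> F"
      then show "(z, f z) \<in> M'" using MF M'I[of z "f z" 0] by simp
    qed
    have "M \<subseteq> M'" using M'I[of _ _ 0] by auto
    then have "M' = M" using Mmax vM' unfolding A_def by blast
    moreover have "(x, c) \<in> M'" using M'I[OF M00, of 1] by simp
    ultimately show False using nx by blast
  qed
  define g where "g x = (SOME a. (x, a) \<in> M)" for x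
  have gM: "(x, g x) \<in> M" if "x \<in> E" for x
    unfolding g_def using Mtot[OF that] by (rule someI_ex)
  have gval: "g x = a" if "(x, a) \<in> M" for x a
    using Mfun[OF gM that] Mb that by blast
  show ?thesis
  proof (intro exI[of _ g] conjI ballI allI)
    fix x assume "x \<in> F" then show "g x = f x" using MF gval by blast
  next
    fix x assume "x \<in> E" then show "g x \<le> p x" using gM Mb by blast
  next
    fix x y assume "x \<in> E" "y \<in> E"
    then show "g (x + y) = g x + g y" using gval Madd gM by blast
  next
    fix x c assume "x \<in> E"
    then show "g (c *\<^sub>R x) = c * g x" using gval Mscale gM by blast
  qed
qed




lemma apply_Bcontfun_nat:
  fixes f :: "nat \<Rightarrow> 'b::real_normed_vector"
  assumes "\<And>n. norm (f n) \<le> b"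
  shows "apply_bcontfun (Bcontfun f) = f"
  by (rule Bcontfun_inverse, rule bcontfun_normI) (auto intro: assms)

definition fsv :: "nat \<Rightarrow> (nat \<Rightarrow> 'b::real_normed_vector) \<Rightarrow> (nat \<Rightarrow>\<^sub>C 'b)" where
  "fsv N v = Bcontfun (\<lambda>n. if n < N then v n else 0)"

lemma fsv_apply: "apply_bcontfun (fsv N v) = (\<lambda>n. if n < N then v n else 0)"
  unfolding fsv_def
proof (rule apply_Bcontfun_nat[of _ "\<Sum>m<N. norm (v m)"])
  fix n show "norm (if n < N then v n else 0) \<le> (\<Sum>m<N. norm (v m))"
    by (auto intro!: member_le_sum sum_nonneg)
qed

definition dlt :: "nat \<Rightarrow> 'b::real_normed_vector \<Rightarrow> (nat \<Rightarrow>\<^sub>C 'b)" where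
  "dlt n x = Bcontfun (\<lambda>m. if m = n then x else 0)"

lemma dlt_apply: "apply_bcontfun (dlt n x) = (\<lambda>m. if m = n then x else 0)"
  unfolding dlt_def by (rule apply_Bcontfun_nat[of _ "norm x"]) auto

lemma unit_vec_apply: "apply_bcontfun (unit_vec j) n = (if n = j then 1 else 0)"
  unfolding unit_vec_def using apply_Bcontfun_nat[of "\<lambda>n. if n = j then 1::real else 0" 1] by simp

lemma bcf_mult_summable:
  fixes h :: linf
  assumes "summable (\<lambda>n. \<bar>a n\<bar>)"
  shows "summable (\<lambda>n. apply_bcontfun h n * a n)"
    "\<bar>\<Sum>n. apply_bcontfun h n * a n\<bar> \<le> norm h * (\<Sum>n. \<bar>a n\<bar>)"
proof -
  have b: "\<bar>apply_bcontfun h n * a n\<bar> \<le> norm h * \<bar>a n\<bar>" for n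
  proof -
    have "\<bar>apply_bcontfun h n\<bar> \<le> norm h" using norm_bounded[of h n] by simp
    then show ?thesis by (simp add: abs_mult mult_right_mono)
  qed
  have s2: "summable (\<lambda>n. norm h * \<bar>a n\<bar>)" using assms by (rule summable_mult)
  have s3: "summable (\<lambda>n. \<bar>apply_bcontfun h n * a n\<bar>)"
    by (rule summable_comparison_test'[OF s2, of 0]) (simp add: b)
  then show "summable (\<lambda>n. apply_bcontfun h n * a n)" by (rule summable_rabs_cancel)
  have "\<bar>\<Sum>n. apply_bcontfun h n * a n\<bar> \<le> (\<Sum>n. \<bar>apply_bcontfun h n * a n\<bar>)"
    using s3 by (rule summable_rabs)
  also have "\<dots> \<le> (\<Sum>n. norm h * \<bar>a n\<bar>)" using s3 s2 b by (intro suminf_le) auto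
  also have "\<dots> = norm h * (\<Sum>n. \<bar>a n\<bar>)" using assms by (rule suminf_mult)
  finally show "\<bar>\<Sum>n. apply_bcontfun h n * a n\<bar> \<le> norm h * (\<Sum>n. \<bar>a n\<bar>)" .
qed

lemma tensor_Nil[simp]: "tensor [] = (\<lambda>n. 0)"
  unfolding tensor_def by simp

lemma tensor_Cons: "tensor ((h, x) # l) = (\<lambda>n. apply_bcontfun h n *\<^sub>R x + tensor l n)"
  unfolding tensor_def by simp

lemma tensor_append: "tensor (l1 @ l2) = (\<lambda>n. tensor l1 n + tensor l2 n)"
  unfolding tensor_def by simp

lemma tensor_units: "tensor (map (\<lambda>j. (unit_vec j, u j)) [0..<N]) = (\<lambda>n. if n < N then u n else 0)"
proof (induction N)
  case 0
  then show ?case by simp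
next
  case (Suc N)
  show ?case
    by (rule ext) (auto simp: tensor_append Suc tensor_Cons unit_vec_apply less_Suc_eq)
qed

lemma tensor_proj:
  assumes P: "\<And>h. apply_bcontfun (P h) = (\<lambda>n. if n < N then apply_bcontfun h n else 0)"
  shows "tensor (map (\<lambda>(h, x). (P h, x)) l) = (\<lambda>n. if n < N then tensor l n else 0)"
proof (induction l)
  case Nil
  then show ?case by (rule ext) (simp add: tensor_def)
next
  case (Cons a l)
  obtain h x where a: "a = (h, x)" by fastforce
  show ?case unfolding a by (rule ext) (simp add: tensor_Cons Cons P)
qed

lemma tensor_scale: "tensor (map (\<lambda>(h, x). (h, c *\<^sub>R x)) l) = (\<lambda>n. c *\<^sub>R tensor l n)"
proof (induction l)
  case Nil
  then show ?case by simp
next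
  case (Cons a l)
  obtain h x where a: "a = (h, x)" by fastforce
  show ?case unfolding a by (rule ext) (simp add: tensor_Cons Cons algebra_simps)
qed

lemma tensor_in: "tensor l \<in> tensors"
  unfolding tensors_def by simp

context
  fixes J :: "'x::real_normed_vector \<Rightarrow> 'l::real_normed_vector" and T :: "'l \<Rightarrow> nat \<Rightarrow> real"
  assumes J_lin: "linear J" and T_op: "l1_op (range J) T"
begin

lemma TJ_lin: "T (J (a *\<^sub>R x + b *\<^sub>R y)) = (\<lambda>n. a * T (J x) n + b * T (J y) n)"
proof -
  have "J (a *\<^sub>R x + b *\<^sub>R y) = a *\<^sub>R J x + b *\<^sub>R J y"
    using J_lin by (simp add: linear_add linear_scale)
  then show ?thesis using T_op unfolding l1_op_def by auto
qed

lemma TJ_add: "T (J (x + y)) n = T (J x) n + T (J y) n"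
  using TJ_lin[of 1 x 1 y] by (auto dest: fun_cong[where x = n])

lemma TJ_scale: "T (J (c *\<^sub>R x)) n = c * T (J x) n"
  using TJ_lin[of c x 0 x] by (auto dest: fun_cong[where x = n])

lemma TJ_0: "T (J 0) n = 0"
  using TJ_scale[of 0 0 n] by simp

lemma J0: "J 0 = 0"
  using J_lin by (simp add: linear_0)

lemma T0: "T 0 n = 0"
  using TJ_0 J0 by simp

lemma TJ_summable: "summable (\<lambda>n. \<bar>T (J x) n\<bar>)"
  using T_op unfolding l1_op_def by auto

lemma tpair_sums: "(\<lambda>n. T (J (tensor l n)) n) sums tpair (T \<circ> J) l"
proof (induction l)
  case Nil
  then show ?case by (simp add: tpair_def TJ_0)
next
  case (Cons a l)
  obtain h x where a: "a = (h, x)" by fastforce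
  have e: "T (J (tensor (a # l) n)) n = apply_bcontfun h n * T (J x) n + T (J (tensor l n)) n" for n
    unfolding a tensor_Cons using TJ_lin[of "apply_bcontfun h n" x 1 "tensor l n"] by simp
  have s: "(\<lambda>n. apply_bcontfun h n * T (J x) n) sums (\<Sum>n. apply_bcontfun h n * T (J x) n)"
    using bcf_mult_summable(1)[OF TJ_summable] by (rule summable_sums)
  have tp: "tpair (T \<circ> J) (a # l) = (\<Sum>n. apply_bcontfun h n * T (J x) n) + tpair (T \<circ> J) l"
    unfolding a tpair_def by simp
  show ?case unfolding e tp by (rule sums_add[OF s Cons])
qed

end




section \<open>Decomposition in a vector lattice\<close>

lemma decomp_step:
  fixes ks :: "('l::banach_lattice \<times> (nat \<Rightarrow> real)) list"
  assumes "\<forall>k\<in>set ks. 0 \<le> fst k" "- (\<Sum>k\<leftarrow>ks. fst k) \<le> y" "y \<le> (\<Sum>k\<leftarrow>ks. fst k)"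
  shows "\<exists>ks'. (\<Sum>k\<leftarrow>ks'. fst k) = (\<Sum>k\<leftarrow>ks. fst k) \<and> (\<forall>k\<in>set ks'. 0 \<le> fst k) \<and>
     ((\<forall>k\<in>set ks. \<forall>n. \<bar>snd k n\<bar> \<le> 1) \<longrightarrow> (\<forall>k\<in>set ks'. \<forall>n. \<bar>snd k n\<bar> \<le> 1)) \<and>
     (\<forall>n. n \<noteq> N \<longrightarrow> (\<Sum>k\<leftarrow>ks'. snd k n *\<^sub>R fst k) = (\<Sum>k\<leftarrow>ks. snd k n *\<^sub>R fst k)) \<and>
     (\<Sum>k\<leftarrow>ks'. snd k N *\<^sub>R fst k) = y"
  using assms
proof (induction ks arbitrary: y)
  case Nil
  then have "y = 0" by (simp add: antisym)
  then show ?case by (intro exI[of _ "[]"]) simp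
next
  case (Cons k ks)
  obtain w0 c0 where k: "k = (w0, c0)" by fastforce
  define S where "S = (\<Sum>k\<leftarrow>ks. fst k)"
  have w0: "0 \<le> w0" using Cons.prems k by simp
  have S0: "0 \<le> S" unfolding S_def using Cons.prems(1) by (intro sum_list_nonneg) auto
  have "- (w0 + S) \<le> y" "y \<le> w0 + S" using Cons.prems k S_def by simp_all
  from riesz2[OF w0 S0 this] obtain y1 y2 where
    yy: "y = y1 + y2" "- w0 \<le> y1" "y1 \<le> w0" "- S \<le> y2" "y2 \<le> S" by blast
  have "\<forall>k\<in>set ks. 0 \<le> fst k" using Cons.prems(1) by simp
  from Cons.IH[OF this, of y2] yy(4,5) obtain ks'' where ih:
    "(\<Sum>k\<leftarrow>ks''. fst k) = S" "\<forall>k\<in>set ks''. 0 \<le> fst k"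
    "(\<forall>k\<in>set ks. \<forall>n. \<bar>snd k n\<bar> \<le> 1) \<longrightarrow> (\<forall>k\<in>set ks''. \<forall>n. \<bar>snd k n\<bar> \<le> 1)"
    "\<forall>n. n \<noteq> N \<longrightarrow> (\<Sum>k\<leftarrow>ks''. snd k n *\<^sub>R fst k) = (\<Sum>k\<leftarrow>ks. snd k n *\<^sub>R fst k)"
    "(\<Sum>k\<leftarrow>ks''. snd k N *\<^sub>R fst k) = y2"
    unfolding S_def by blast
  define a where "a = (1/2::real) *\<^sub>R (w0 + y1)"
  define b where "b = (1/2::real) *\<^sub>R (w0 - y1)"
  have ab: "a + b = w0" unfolding a_def b_def by (simp add: scaleR_add_right[symmetric])
  have ab2: "a - b = y1" unfolding a_def b_def by (simp add: scaleR_diff_right[symmetric])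
  have "0 \<le> y1 + w0" using add_right_mono[OF yy(2), of w0] by simp
  then have a0: "0 \<le> a" unfolding a_def by (intro scaleR_nonneg_nonneg) (simp_all add: add.commute)
  have "0 \<le> w0 - y1" using add_right_mono[OF yy(3), of "- y1"] by simp
  then have b0: "0 \<le> b" unfolding b_def by (intro scaleR_nonneg_nonneg) simp_all
  have cab: "c *\<^sub>R a + c *\<^sub>R b = c *\<^sub>R w0" for c
    using ab by (simp add: scaleR_add_right[symmetric])
  define ks' where "ks' = (a, c0(N := 1)) # (b, c0(N := -1)) # ks''"
  show ?case
  proof (rule exI[of _ ks'], intro conjI allI impI)
    show "(\<Sum>k\<leftarrow>ks'. fst k) = (\<Sum>k\<leftarrow>k # ks. fst k)"
      unfolding ks'_def k using ih(1) ab S_def by (simp add: add.assoc[symmetric])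
    show "\<forall>k\<in>set ks'. 0 \<le> fst k" unfolding ks'_def using a0 b0 ih(2) by simp
  next
    assume "\<forall>k\<in>set (k # ks). \<forall>n. \<bar>snd k n\<bar> \<le> 1"
    then show "\<forall>k\<in>set ks'. \<forall>n. \<bar>snd k n\<bar> \<le> 1" unfolding ks'_def using ih(3) k by auto
  next
    fix n assume nN: "n \<noteq> N"
    have "(\<Sum>k\<leftarrow>ks'. snd k n *\<^sub>R fst k) = c0 n *\<^sub>R a + (c0 n *\<^sub>R b + (\<Sum>k\<leftarrow>ks''. snd k n *\<^sub>R fst k))"
      unfolding ks'_def using nN by simp
    also have "\<dots> = c0 n *\<^sub>R w0 + (\<Sum>k\<leftarrow>ks. snd k n *\<^sub>R fst k)"
      using ih(4) nN cab[of "c0 n"] by (simp add: add.assoc[symmetric])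
    finally show "(\<Sum>k\<leftarrow>ks'. snd k n *\<^sub>R fst k) = (\<Sum>k\<leftarrow>k # ks. snd k n *\<^sub>R fst k)"
      unfolding k by simp
  next
    have "(\<Sum>k\<leftarrow>ks'. snd k N *\<^sub>R fst k) = a + (- b + y2)"
      unfolding ks'_def using ih(5) by simp
    also have "\<dots> = y" using ab2 yy(1) by (simp add: algebra_simps)
    finally show "(\<Sum>k\<leftarrow>ks'. snd k N *\<^sub>R fst k) = y" .
  qed
qed

lemma decomp:
  fixes v :: "nat \<Rightarrow> 'l::banach_lattice"
  assumes w0: "0 \<le> w" and vw: "\<forall>n<N. labs (v n) \<le> w"
  shows "\<exists>ks. (\<Sum>k\<leftarrow>ks. fst k) = w \<and> (\<forall>k\<in>set ks. 0 \<le> fst k) \<and> (\<forall>k\<in>set ks. \<forall>n. \<bar>snd k n\<bar> \<le> 1) \<and>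
     (\<forall>n<N. v n = (\<Sum>k\<leftarrow>ks. snd k n *\<^sub>R fst k))"
  using vw
proof (induction N)
  case 0
  show ?case by (rule exI[of _ "[(w, \<lambda>_. 0)]"]) (simp add: w0)
next
  case (Suc N)
  then obtain ks where ks: "(\<Sum>k\<leftarrow>ks. fst k) = w" "\<forall>k\<in>set ks. 0 \<le> fst k"
    "\<forall>k\<in>set ks. \<forall>n. \<bar>snd k n\<bar> \<le> 1" "\<forall>n<N. v n = (\<Sum>k\<leftarrow>ks. snd k n *\<^sub>R fst k)"
    by auto
  have "- w \<le> v N" "v N \<le> w" using Suc.prems labs_le_iff by auto
  with decomp_step[of ks "v N" N] ks obtain ks' where ks':
    "(\<Sum>k\<leftarrow>ks'. fst k) = w" "\<forall>k\<in>set ks'. 0 \<le> fst k" "\<forall>k\<in>set ks'. \<forall>n. \<bar>snd k n\<bar> \<le> 1"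
    "\<forall>n. n \<noteq> N \<longrightarrow> (\<Sum>k\<leftarrow>ks'. snd k n *\<^sub>R fst k) = (\<Sum>k\<leftarrow>ks. snd k n *\<^sub>R fst k)"
    "(\<Sum>k\<leftarrow>ks'. snd k N *\<^sub>R fst k) = v N"
    by auto
  show ?case
  proof (rule exI[of _ ks'], intro conjI allI impI)
    fix n assume "n < Suc N"
    then consider "n < N" | "n = N" by linarith
    then show "v n = (\<Sum>k\<leftarrow>ks'. snd k n *\<^sub>R fst k)"
    proof cases
      case 1 then show ?thesis using ks(4) ks'(4) by auto
    next
      case 2 then show ?thesis using ks'(5) by simp
    qed
  qed (use ks' in auto)
qed

lemma T'_lin:
  assumes "l1_op UNIV T'"
  shows "T' (a *\<^sub>R u + b *\<^sub>R v) n = a * T' u n + b * T' v n"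
  using assms unfolding l1_op_def by auto

lemma T'_0: "l1_op UNIV T' \<Longrightarrow> T' 0 n = 0"
  using T'_lin[of T' 0 0 0 0 n] by simp

lemma T'_add: "l1_op UNIV T' \<Longrightarrow> T' (u + v) n = T' u n + T' v n"
  using T'_lin[of T' 1 u 1 v n] by simp

lemma T'_scale: "l1_op UNIV T' \<Longrightarrow> T' (c *\<^sub>R u) n = c * T' u n"
  using T'_lin[of T' c u 0 u n] by simp

lemma T'_neg: "l1_op UNIV T' \<Longrightarrow> T' (- u) n = - T' u n"
  using T'_scale[of T' "-1" u n] by simp

lemma majorant_finite_sum:
  fixes T' :: "'l::banach_lattice \<Rightarrow> nat \<Rightarrow> real" and z :: "'l \<Rightarrow> real"
  assumes T'op: "l1_op UNIV T'" and zlin: "linear z" and zpos: "\<And>w. 0 \<le> w \<Longrightarrow> 0 \<le> z w"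
    and maj: "\<And>h v w. labs v \<le> w \<Longrightarrow> l1_adjoint T' h v \<le> norm h * z w"
    and w0: "0 \<le> w" and vw: "\<forall>n<N. labs (v n) \<le> w"
  shows "(\<Sum>n<N. T' (v n) n) \<le> z w"
proof -
  have claim: "(\<Sum>n<N. T' (\<Sum>k\<leftarrow>ks. snd k n *\<^sub>R fst k) n) \<le> z (\<Sum>k\<leftarrow>ks. fst k)"
    if "\<forall>k\<in>set ks. 0 \<le> fst k \<and> (\<forall>n. \<bar>snd k n\<bar> \<le> 1)" for ks
    using that
  proof (induction ks)
    case Nil
    then show ?case using T'_0[OF T'op] zlin by (simp add: linear_0)
  next
    case (Cons k ks)
    obtain w0 c0 where k: "k = (w0, c0)" by fastforce
    have w00: "0 \<le> w0" and c0: "\<And>n. \<bar>c0 n\<bar> \<le> 1" using Cons.prems k by auto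
    define h :: linf where "h = fsv N c0"
    have happ: "apply_bcontfun h = (\<lambda>n. if n < N then c0 n else 0)" unfolding h_def by (rule fsv_apply)
    have hn: "norm h \<le> 1"
      by (rule norm_bound) (simp add: happ c0)
    have "l1_adjoint T' h w0 = (\<Sum>n<N. c0 n * T' w0 n)"
      unfolding l1_adjoint_def happ by (subst suminf_finite[of "{..<N}"]) auto
    moreover have "l1_adjoint T' h w0 \<le> norm h * z w0"
      by (rule maj) (simp add: labs_pos w00)
    moreover have "norm h * z w0 \<le> z w0"
      using hn zpos[OF w00] by (simp add: mult_left_le_one_le)
    ultimately have 1: "(\<Sum>n<N. c0 n * T' w0 n) \<le> z w0" by simp
    have 2: "(\<Sum>n<N. T' (\<Sum>k\<leftarrow>ks. snd k n *\<^sub>R fst k) n) \<le> z (\<Sum>k\<leftarrow>ks. fst k)"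
      using Cons by simp
    have "(\<Sum>n<N. T' (\<Sum>k\<leftarrow>k # ks. snd k n *\<^sub>R fst k) n)
        = (\<Sum>n<N. c0 n * T' w0 n + T' (\<Sum>k\<leftarrow>ks. snd k n *\<^sub>R fst k) n)"
      unfolding k using T'_lin[OF T'op, of "c0 _" w0 1] by simp
    also have "\<dots> = (\<Sum>n<N. c0 n * T' w0 n) + (\<Sum>n<N. T' (\<Sum>k\<leftarrow>ks. snd k n *\<^sub>R fst k) n)"
      by (rule sum.distrib)
    also have "\<dots> \<le> z w0 + z (\<Sum>k\<leftarrow>ks. fst k)" using 1 2 by (rule add_mono)
    also have "\<dots> = z (\<Sum>k\<leftarrow>k # ks. fst k)" unfolding k using zlin by (simp add: linear_add)
    finally show ?case .
  qed
  obtain ks where ks: "(\<Sum>k\<leftarrow>ks. fst k) = w" "\<forall>k\<in>set ks. 0 \<le> fst k" "\<forall>k\<in>set ks. \<forall>n. \<bar>snd k n\<bar> \<le> 1"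
    "\<forall>n<N. v n = (\<Sum>k\<leftarrow>ks. snd k n *\<^sub>R fst k)"
    using decomp[OF w0 vw] by blast
  have "(\<Sum>n<N. T' (v n) n) = (\<Sum>n<N. T' (\<Sum>k\<leftarrow>ks. snd k n *\<^sub>R fst k) n)"
    using ks(4) by (intro sum.cong) auto
  also have "\<dots> \<le> z w" using claim[of ks] ks by auto
  finally show ?thesis .
qed

lemma dual_abs_pos_0: "\<psi> 0 = 0 \<Longrightarrow> dual_abs_pos \<psi> (0::'l::banach_lattice) = 0"
proof -
  assume "\<psi> 0 = 0"
  moreover have "{\<psi> v | v. labs v \<le> (0::'l)} = {\<psi> 0}"
    using labs_le_zero by fastforce
  ultimately show ?thesis unfolding dual_abs_pos_def by simp
qed

lemma dual_abs_eq: "0 \<le> w \<Longrightarrow> \<psi> 0 = 0 \<Longrightarrow> dual_abs \<psi> (w::'l::banach_lattice) = dual_abs_pos \<psi> w"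
proof -
  assume w0: "0 \<le> w" and p0: "\<psi> 0 = 0"
  have "sup w 0 = w" using w0 by (rule sup_absorb1)
  moreover have "sup (- w) 0 = 0" using w0 by (intro sup_absorb2) simp
  ultimately show ?thesis unfolding dual_abs_def using dual_abs_pos_0[of \<psi>, OF p0] by simp
qed

lemma dap_upper:
  assumes "labs v \<le> w" "\<And>u. labs u \<le> w \<Longrightarrow> \<psi> u \<le> B"
  shows "\<psi> v \<le> dual_abs_pos \<psi> (w::'l::banach_lattice)"
  unfolding dual_abs_pos_def
  by (rule cSup_upper) (use assms in \<open>auto intro!: bdd_aboveI[of _ B]\<close>)

lemma dap_least:
  assumes "0 \<le> w" "\<And>u. labs u \<le> w \<Longrightarrow> \<psi> u \<le> B"
  shows "dual_abs_pos \<psi> (w::'l::banach_lattice) \<le> B"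
  unfolding dual_abs_pos_def
proof (rule cSup_least)
  show "{\<psi> v |v. labs v \<le> w} \<noteq> {}" using assms(1) by (auto intro!: exI[of _ 0])
qed (use assms in auto)

lemma adj_bound:
  assumes T'op: "l1_op UNIV T'"
  shows "\<exists>K\<ge>0. \<forall>h u. \<bar>l1_adjoint T' h u\<bar> \<le> norm h * (K * norm u)"
proof -
  obtain C where C: "\<And>u. l1norm (T' u) \<le> C * norm u" using T'op unfolding l1_op_def by blast
  have s: "\<And>u. summable (\<lambda>n. \<bar>T' u n\<bar>)" using T'op unfolding l1_op_def by blast
  show ?thesis
  proof (intro exI[of _ "max C 0"] conjI allI)
    fix h u
    have "\<bar>l1_adjoint T' h u\<bar> \<le> norm h * l1norm (T' u)"
      unfolding l1_adjoint_def l1norm_def by (rule bcf_mult_summable(2)[OF s])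
    also have "\<dots> \<le> norm h * (max C 0 * norm u)"
    proof (rule mult_left_mono)
      have "C * norm u \<le> max C 0 * norm u" by (rule mult_right_mono) simp_all
      then show "l1norm (T' u) \<le> max C 0 * norm u" using C[of u] by linarith
    qed simp
    finally show "\<bar>l1_adjoint T' h u\<bar> \<le> norm h * (max C 0 * norm u)" .
  qed simp
qed

lemma adj_0: assumes "l1_op UNIV T'" shows "l1_adjoint T' h 0 = 0"
  unfolding l1_adjoint_def using T'_0[OF assms] by simp

lemma maj_from_majorant:
  fixes T' :: "'l::banach_lattice \<Rightarrow> nat \<Rightarrow> real"
  assumes T'op: "l1_op UNIV T'" and mj: "dual_ob_majorant (l1_adjoint T') z"
    and vw: "labs v \<le> w"
  shows "l1_adjoint T' h v \<le> norm h * z w"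
proof -
  have w0: "0 \<le> w" using labs_nonneg[of v] vw by (rule order_trans)
  obtain K where K: "K \<ge> 0" "\<And>h u. \<bar>l1_adjoint T' h u\<bar> \<le> norm h * (K * norm u)"
    using adj_bound[OF T'op] by blast
  have bnd: "l1_adjoint T' h u \<le> norm h * (K * norm w)" if "labs u \<le> w" for u
  proof -
    have "l1_adjoint T' h u \<le> norm h * (K * norm u)" using K(2)[of h u] by simp
    also have "\<dots> \<le> norm h * (K * norm w)"
      using labs_le_norm[OF that] K(1) by (intro mult_left_mono) simp_all
    finally show ?thesis .
  qed
  have "l1_adjoint T' h v \<le> dual_abs_pos (l1_adjoint T' h) w"
    by (rule dap_upper[OF vw bnd])
  also have "\<dots> = dual_abs (l1_adjoint T' h) w"
    using dual_abs_eq[of w "l1_adjoint T' h", OF w0 adj_0[OF T'op]] by simp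
  also have "\<dots> \<le> norm h * z w"
    using mj w0 unfolding dual_ob_majorant_def dual_le_def by blast
  finally show ?thesis .
qed




section \<open>The lower bound\<close>

context
  fixes \<alpha> :: "(nat \<Rightarrow> 'x::banach) \<Rightarrow> real" and J :: "'x \<Rightarrow> 'l::banach_lattice"
    and T :: "'l \<Rightarrow> nat \<Rightarrow> real"
  assumes alpha: "left_tensorial \<alpha>" and J_lin: "linear J"
    and J_alpha: "\<And>k (y :: nat \<Rightarrow> 'x). k \<ge> 1 \<Longrightarrow>
        norm (Sup_fin ((\<lambda>j. labs (J (y j))) ` {..<k}))
          = \<alpha> (tensor (map (\<lambda>j. (unit_vec j, y j)) [0..<k]))"
    and T_op: "l1_op (range J) T"
begin

lemma alpha_tn: "tensor_norm \<alpha>"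
  using alpha unfolding left_tensorial_def by blast

lemma alpha_nonneg: "0 \<le> \<alpha> (tensor l)"
  using alpha_tn tensor_in[of l] unfolding tensor_norm_def by blast

lemma alpha_zero: "\<alpha> (\<lambda>n. 0) = 0"
proof -
  have mem: "(\<lambda>n. 0) \<in> tensors" using tensor_in[of "[]"] by simp
  from alpha_tn have "\<forall>u\<in>tensors. (\<alpha> u = 0) = (u = (\<lambda>_. 0))" unfolding tensor_norm_def by blast
  with mem show ?thesis by auto
qed

lemma alpha_proj: "\<alpha> (\<lambda>n. if n < N then tensor l n else 0) \<le> \<alpha> (tensor l)"
proof -
  define P where "P h = fsv N (apply_bcontfun h)" for h :: linf
  have Pa: "apply_bcontfun (P h) = (\<lambda>n. if n < N then apply_bcontfun h n else 0)" for h
    unfolding P_def by (rule fsv_apply)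
  have Pb: "norm (P h) \<le> norm h * 1" for h
    by simp (rule norm_bound, auto simp: Pa, metis norm_bounded real_norm_def)
  have bl: "bounded_linear P"
    by (rule bounded_linear_intro[OF _ _ Pb]) (auto intro!: bcontfun_eqI simp: Pa)
  have o1: "onorm P \<le> 1" by (rule onorm_bound) (use Pb in auto)
  have o0: "0 \<le> onorm P" using bl by (rule onorm_pos_le)
  have "\<alpha> (tensor (map (\<lambda>(h, x). (P h, x)) l)) \<le> onorm P * \<alpha> (tensor l)"
    using alpha bl unfolding left_tensorial_def by blast
  also have "\<dots> \<le> \<alpha> (tensor l)" using o1 o0 alpha_nonneg[of l] by (simp add: mult_left_le_one_le)
  finally show ?thesis unfolding tensor_proj[OF Pa] .
qed

lemma lower_bound:
  assumes T'op: "l1_op UNIV T'" and ext: "\<forall>u\<in>range J. T' u = T u"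
    and mj: "dual_ob_majorant (l1_adjoint T') z"
  shows "\<bar>tpair (T \<circ> J) l\<bar> \<le> onorm z * \<alpha> (tensor l)"
proof -
  have zbl: "bounded_linear z" using mj unfolding dual_ob_majorant_def dual_space_def by blast
  then have zlin: "linear z" by (rule bounded_linear.linear)
  have zpos: "\<And>w. 0 \<le> w \<Longrightarrow> 0 \<le> z w" using mj unfolding dual_ob_majorant_def dual_le_def by blast
  have maj: "\<And>h v w. labs v \<le> w \<Longrightarrow> l1_adjoint T' h v \<le> norm h * z w"
    using maj_from_majorant[OF T'op mj] by blast
  have oz: "0 \<le> onorm z" using zbl by (rule onorm_pos_le)
  define u where "u = tensor l"
  have bndN: "\<bar>\<Sum>n<N. T (J (u n)) n\<bar> \<le> onorm z * \<alpha> (tensor l)" if N1: "N \<ge> 1" for N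
  proof -
    define W where "W = Sup_fin ((\<lambda>j. labs (J (u j))) ` {..<N})"
    have vw: "\<forall>n<N. labs (J (u n)) \<le> W" unfolding W_def by (auto intro: Sup_fin.coboundedI)
    have W0: "0 \<le> W" using labs_nonneg[of "J (u 0)"] vw N1 by (meson less_le_trans order_trans zero_less_one)
    have s1: "(\<Sum>n<N. T' (J (u n)) n) \<le> z W"
      by (rule majorant_finite_sum[OF T'op zlin zpos maj W0]) (use vw in auto)
    have s2: "(\<Sum>n<N. T' (- J (u n)) n) \<le> z W"
      by (rule majorant_finite_sum[OF T'op zlin zpos maj W0]) (use vw in auto)
    have e1: "(\<Sum>n<N. T (J (u n)) n) = (\<Sum>n<N. T' (J (u n)) n)" using ext by simp
    have e2: "(\<Sum>n<N. T' (- J (u n)) n) = - (\<Sum>n<N. T' (J (u n)) n)"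
      using T'_neg[OF T'op] by (simp add: sum_negf)
    have "\<bar>\<Sum>n<N. T (J (u n)) n\<bar> \<le> z W" using s1 s2 e1 e2 by linarith
    also have "\<dots> \<le> onorm z * norm W" using onorm[OF zbl, of W] by simp
    also have "norm W = \<alpha> (tensor (map (\<lambda>j. (unit_vec j, u j)) [0..<N]))"
      unfolding W_def by (rule J_alpha[OF N1])
    also have "\<dots> = \<alpha> (\<lambda>n. if n < N then tensor l n else 0)" unfolding tensor_units u_def ..
    also have "onorm z * \<dots> \<le> onorm z * \<alpha> (tensor l)"
      using alpha_proj oz by (rule mult_left_mono)
    finally show ?thesis .
  qed
  have lim: "(\<lambda>N. \<Sum>n<N. T (J (u n)) n) \<longlonglongrightarrow> tpair (T \<circ> J) l"
    using tpair_sums[OF J_lin T_op, of l] unfolding sums_def u_def .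
  show ?thesis
    by (rule LIMSEQ_le_const2[OF tendsto_rabs[OF lim]]) (use bndN in auto)
qed

lemma alpha_dual_le:
  assumes "\<And>l. \<bar>tpair S l\<bar> \<le> B * \<alpha> (tensor l)" "0 \<le> B"
  shows "alpha_dual \<alpha> S \<le> B"
  unfolding alpha_dual_def
proof (rule cSup_least)
  show "{\<bar>tpair S l\<bar> |l. \<alpha> (tensor l) \<le> 1} \<noteq> {}"
    using alpha_zero by (auto intro!: exI[of _ "[]"])
next
  fix x assume "x \<in> {\<bar>tpair S l\<bar> |l. \<alpha> (tensor l) \<le> 1}"
  then obtain l where l: "x = \<bar>tpair S l\<bar>" "\<alpha> (tensor l) \<le> 1" by blast
  have "x \<le> B * \<alpha> (tensor l)" using assms(1) l(1) by simp
  also have "\<dots> \<le> B" using l(2) assms(2) alpha_nonneg[of l] by (simp add: mult_right_le_one_le)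
  finally show "x \<le> B" .
qed

lemma A_facts:
  assumes dual: "in_alpha_dual \<alpha> (T \<circ> J)"
  shows "0 \<le> alpha_dual \<alpha> (T \<circ> J)"
    and "\<bar>tpair (T \<circ> J) l\<bar> \<le> alpha_dual \<alpha> (T \<circ> J) * \<alpha> (tensor l)"
proof -
  obtain C where C: "\<And>l. \<bar>tpair (T \<circ> J) l\<bar> \<le> C * \<alpha> (tensor l)"
    using dual unfolding in_alpha_dual_def by blast
  define S where "S = {\<bar>tpair (T \<circ> J) l\<bar> |l. \<alpha> (tensor l) \<le> 1}"
  have bdd: "bdd_above S"
  proof (rule bdd_aboveI[of _ "max C 0"])
    fix x assume "x \<in> S"
    then obtain l where l: "x = \<bar>tpair (T \<circ> J) l\<bar>" "\<alpha> (tensor l) \<le> 1" unfolding S_def by blast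
    have a0: "0 \<le> \<alpha> (tensor l)" by (rule alpha_nonneg)
    have "C * \<alpha> (tensor l) \<le> max C 0"
    proof (cases "C \<ge> 0")
      case True then show ?thesis using l(2) a0 by (simp add: mult_right_le_one_le)
    next
      case False then show ?thesis using a0 by (simp add: mult_nonpos_nonneg)
    qed
    then show "x \<le> max C 0" using C[of l] l(1) by linarith
  qed
  have upper: "\<bar>tpair (T \<circ> J) l\<bar> \<le> alpha_dual \<alpha> (T \<circ> J)" if "\<alpha> (tensor l) \<le> 1" for l
    unfolding alpha_dual_def using bdd that unfolding S_def by (auto intro!: cSup_upper)
  show "0 \<le> alpha_dual \<alpha> (T \<circ> J)"
    using upper[of "[]"] alpha_zero by simp
  show "\<bar>tpair (T \<circ> J) l\<bar> \<le> alpha_dual \<alpha> (T \<circ> J) * \<alpha> (tensor l)"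
  proof (cases "\<alpha> (tensor l) = 0")
    case True
    then show ?thesis using C[of l] by simp
  next
    case False
    define a where "a = \<alpha> (tensor l)"
    have a0: "a > 0" using False alpha_nonneg[of l] unfolding a_def by linarith
    define l' where "l' = map (\<lambda>(h, x). (h, (1/a) *\<^sub>R x)) l"
    have tl': "tensor l' = (\<lambda>n. (1/a) *\<^sub>R tensor l n)" unfolding l'_def by (rule tensor_scale)
    have "\<alpha> (tensor l') = \<bar>1/a\<bar> * a"
      unfolding tl' a_def using alpha_tn tensor_in[of l] unfolding tensor_norm_def by blast
    then have al': "\<alpha> (tensor l') \<le> 1" using a0 by simp
    have "(\<lambda>n. T (J (tensor l' n)) n) sums tpair (T \<circ> J) l'" by (rule tpair_sums[OF J_lin T_op])
    moreover have "(\<lambda>n. T (J (tensor l' n)) n) = (\<lambda>n. (1/a) * T (J (tensor l n)) n)"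
      unfolding tl' using TJ_scale[OF J_lin T_op] by simp
    moreover have "(\<lambda>n. (1/a) * T (J (tensor l n)) n) sums ((1/a) * tpair (T \<circ> J) l)"
      by (rule sums_mult[OF tpair_sums[OF J_lin T_op]])
    ultimately have "tpair (T \<circ> J) l' = (1/a) * tpair (T \<circ> J) l" using sums_unique2 by metis
    then have "\<bar>tpair (T \<circ> J) l\<bar> / a \<le> alpha_dual \<alpha> (T \<circ> J)"
      using upper[OF al'] a0 by (simp add: abs_mult)
    then show ?thesis using a0 unfolding a_def[symmetric] by (simp add: divide_le_eq mult.commute)
  qed
qed

end




section \<open>Finitely supported sequences and the sublinear functional\<close>

definition fsupp :: "(nat \<Rightarrow>\<^sub>C 'b::real_normed_vector) \<Rightarrow> bool" where
  "fsupp v \<longleftrightarrow> (\<exists>N. \<forall>n\<ge>N. apply_bcontfun v n = 0)"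

definition ssup :: "(nat \<Rightarrow>\<^sub>C 'l::banach_lattice) \<Rightarrow> 'l" where
  "ssup v = Sup_fin (insert 0 (labs ` range (apply_bcontfun v)))"

lemma fsupp_finite_range: "fsupp v \<Longrightarrow> finite (range (apply_bcontfun v))"
proof -
  assume "fsupp v"
  then obtain N where N: "\<forall>n\<ge>N. apply_bcontfun v n = 0" unfolding fsupp_def by blast
  have "range (apply_bcontfun v) \<subseteq> insert 0 (apply_bcontfun v ` {..<N})"
  proof
    fix y assume "y \<in> range (apply_bcontfun v)"
    then obtain n where y: "y = apply_bcontfun v n" by blast
    show "y \<in> insert 0 (apply_bcontfun v ` {..<N})"
    proof (cases "n < N")
      case True then show ?thesis using y by blast
    next
      case False then show ?thesis using y N by simp
    qed
  qed
  then show ?thesis by (rule finite_subset) simp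
qed

lemma fsupp_finite: "fsupp v \<Longrightarrow> finite (insert 0 (labs ` range (apply_bcontfun v)))"
  using fsupp_finite_range by blast

lemma ssup_upper: "fsupp v \<Longrightarrow> labs (apply_bcontfun v n) \<le> ssup v"
  unfolding ssup_def by (rule Sup_fin.coboundedI[OF fsupp_finite]) auto

lemma ssup_nonneg: "fsupp v \<Longrightarrow> 0 \<le> ssup v"
  unfolding ssup_def by (rule Sup_fin.coboundedI[OF fsupp_finite]) auto

lemma ssup_le: "fsupp v \<Longrightarrow> 0 \<le> w \<Longrightarrow> (\<And>n. labs (apply_bcontfun v n) \<le> w) \<Longrightarrow> ssup v \<le> w"
  unfolding ssup_def by (rule Sup_fin.boundedI[OF fsupp_finite]) auto

lemma ssup_eq:
  assumes N1: "N \<ge> 1" and N: "\<forall>n\<ge>N. apply_bcontfun v n = 0"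
  shows "ssup v = Sup_fin ((\<lambda>j. labs (apply_bcontfun v j)) ` {..<N})"
proof (rule antisym)
  have fs: "fsupp v" using N unfolding fsupp_def by blast
  define R where "R = Sup_fin ((\<lambda>j. labs (apply_bcontfun v j)) ` {..<N})"
  have up: "labs (apply_bcontfun v j) \<le> R" if "j < N" for j
    unfolding R_def by (rule Sup_fin.coboundedI) (use that in auto)
  have "0 < N" using N1 by simp
  then have R0: "0 \<le> R" using labs_nonneg[of "apply_bcontfun v 0"] up[of 0] by (blast intro: order_trans)
  show "ssup v \<le> R"
  proof (rule ssup_le[OF fs R0])
    fix n show "labs (apply_bcontfun v n) \<le> R"
    proof (cases "n < N")
      case True then show ?thesis by (rule up)
    next
      case False then have "apply_bcontfun v n = 0" using N by simp
      then show ?thesis using R0 by simp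
    qed
  qed
  show "R \<le> ssup v" unfolding R_def
    by (rule Sup_fin.boundedI) (use N1 ssup_upper[OF fs] in \<open>auto simp: lessThan_empty_iff\<close>)
qed

lemma fsupp_fsv: "fsupp (fsv N v)"
  unfolding fsupp_def fsv_apply by (rule exI[of _ N]) simp

lemma fsupp_dlt: "fsupp (dlt n a)"
  unfolding fsupp_def dlt_apply by (rule exI[of _ "Suc n"]) simp

lemma fsupp_0: "fsupp 0"
  unfolding fsupp_def by simp

lemma fsupp_add: "fsupp u \<Longrightarrow> fsupp v \<Longrightarrow> fsupp (u + v)"
proof -
  assume "fsupp u" "fsupp v"
  then obtain N1 N2 where "\<forall>n\<ge>N1. apply_bcontfun u n = 0" "\<forall>n\<ge>N2. apply_bcontfun v n = 0"
    unfolding fsupp_def by blast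
  then have "\<forall>n\<ge>max N1 N2. apply_bcontfun (u + v) n = 0" by simp
  then show ?thesis unfolding fsupp_def by blast
qed

lemma fsupp_scale: "fsupp u \<Longrightarrow> fsupp (c *\<^sub>R u)"
proof -
  assume "fsupp u"
  then obtain N where "\<forall>n\<ge>N. apply_bcontfun u n = 0" unfolding fsupp_def by blast
  then have "\<forall>n\<ge>N. apply_bcontfun (c *\<^sub>R u) n = 0" by simp
  then show ?thesis unfolding fsupp_def by blast
qed

lemma labs_scale_pos: "0 \<le> c \<Longrightarrow> labs (c *\<^sub>R (v::'l::banach_lattice)) \<le> c *\<^sub>R labs v"
proof -
  assume c: "0 \<le> c"
  have 1: "c *\<^sub>R v \<le> c *\<^sub>R labs v" using ge_labs(1)[of v] c by (rule scaleR_left_mono)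
  have "c *\<^sub>R (- labs v) \<le> c *\<^sub>R v" using ge_labs(3)[of v] c by (rule scaleR_left_mono)
  then have 2: "- (c *\<^sub>R labs v) \<le> c *\<^sub>R v" by simp
  show ?thesis unfolding labs_le_iff using 1 2 by simp
qed

lemma fs_sums: "(\<And>n. n \<ge> N \<Longrightarrow> g n = 0) \<Longrightarrow> g sums (\<Sum>n<N. g n)"
  by (rule sums_finite) auto

lemma fs_suminf: "(\<And>n. n \<ge> N \<Longrightarrow> g n = 0) \<Longrightarrow> suminf g = (\<Sum>n<N. g n)" for g :: "nat \<Rightarrow> real"
proof -
  assume "\<And>n. n \<ge> N \<Longrightarrow> g n = 0"
  then have "g sums (\<Sum>n<N. g n)" by (rule fs_sums)
  then show ?thesis by (simp add: sums_iff)
qed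




section \<open>Existence\<close>

context
  fixes \<alpha> :: "(nat \<Rightarrow> 'x::banach) \<Rightarrow> real" and J :: "'x \<Rightarrow> 'l::banach_lattice"
    and T :: "'l \<Rightarrow> nat \<Rightarrow> real"
  assumes alpha: "left_tensorial \<alpha>" and J_lin: "linear J"
    and J_iso: "\<And>x. norm (J x) = norm x"
    and J_alpha: "\<And>k (y :: nat \<Rightarrow> 'x). k \<ge> 1 \<Longrightarrow>
        norm (Sup_fin ((\<lambda>j. labs (J (y j))) ` {..<k}))
          = \<alpha> (tensor (map (\<lambda>j. (unit_vec j, y j)) [0..<k]))"
    and T_op: "l1_op (range J) T"
    and TJ_dual: "in_alpha_dual \<alpha> (T \<circ> J)"
begin

lemma T_add_rJ: "u \<in> range J \<Longrightarrow> u' \<in> range J \<Longrightarrow> T (u + u') n = T u n + T u' n"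
  using TJ_add[OF J_lin T_op] J_lin by (auto simp: linear_add[symmetric])

lemma T_scale_rJ: "u \<in> range J \<Longrightarrow> T (c *\<^sub>R u) n = c * T u n"
  using TJ_scale[OF J_lin T_op] J_lin by (auto simp: linear_scale[symmetric])

lemma T_zero: "T 0 n = 0"
  by (rule T0[OF J_lin T_op])

lemma J_zero: "J 0 = 0"
  by (rule J0[OF J_lin T_op])

definition "A = alpha_dual \<alpha> (T \<circ> J)"

lemma A0: "0 \<le> A"
  unfolding A_def by (rule A_facts(1)[OF alpha J_lin J_alpha T_op TJ_dual])

lemma A_bound: "\<bar>tpair (T \<circ> J) l\<bar> \<le> A * \<alpha> (tensor l)"
  unfolding A_def by (rule A_facts(2)[OF alpha J_lin J_alpha T_op TJ_dual])

definition EE :: "((nat \<Rightarrow>\<^sub>C 'l) \<times> 'l) set" where "EE = {x. fsupp (fst x)}"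
definition FF :: "((nat \<Rightarrow>\<^sub>C 'l) \<times> 'l) set" where
  "FF = {x. fsupp (fst x) \<and> snd x = 0 \<and> (\<forall>n. apply_bcontfun (fst x) n \<in> range J)}"
definition pp :: "((nat \<Rightarrow>\<^sub>C 'l) \<times> 'l) \<Rightarrow> real" where
  "pp x = A * norm (sup (ssup (fst x) - snd x) 0)"
definition ff :: "((nat \<Rightarrow>\<^sub>C 'l) \<times> 'l) \<Rightarrow> real" where
  "ff x = (\<Sum>n. T (apply_bcontfun (fst x) n) n)"

lemma EE_sub: "subspace EE"
  unfolding subspace_def EE_def by (auto intro: fsupp_0 fsupp_add fsupp_scale)

lemma rJ_add: "u \<in> range J \<Longrightarrow> u' \<in> range J \<Longrightarrow> u + u' \<in> range J"
  using J_lin by (auto simp: linear_add[symmetric])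

lemma rJ_scale: "u \<in> range J \<Longrightarrow> c *\<^sub>R u \<in> range J"
  using J_lin by (auto simp: linear_scale[symmetric])

lemma rJ_0: "0 \<in> range J"
  using J_zero by (metis rangeI)

lemma FF_sub: "subspace FF"
  unfolding subspace_def FF_def by (auto intro: fsupp_0 fsupp_add fsupp_scale rJ_add rJ_scale rJ_0)

lemma FF_EE: "FF \<subseteq> EE"
  unfolding FF_def EE_def by auto

lemma pp_add: "x \<in> EE \<Longrightarrow> y \<in> EE \<Longrightarrow> pp (x + y) \<le> pp x + pp y"
proof -
  assume x: "x \<in> EE" and y: "y \<in> EE"
  obtain v1 w1 v2 w2 where xy: "x = (v1, w1)" "y = (v2, w2)" by fastforce
  have f1: "fsupp v1" and f2: "fsupp v2" using x y xy unfolding EE_def by auto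
  have "ssup (v1 + v2) \<le> ssup v1 + ssup v2"
  proof (rule ssup_le[OF fsupp_add[OF f1 f2]])
    show "0 \<le> ssup v1 + ssup v2" using ssup_nonneg[OF f1] ssup_nonneg[OF f2] by simp
    fix n
    have "labs (apply_bcontfun (v1 + v2) n) \<le> labs (apply_bcontfun v1 n) + labs (apply_bcontfun v2 n)"
      by (simp add: labs_triangle)
    also have "\<dots> \<le> ssup v1 + ssup v2" using ssup_upper[OF f1] ssup_upper[OF f2] by (rule add_mono)
    finally show "labs (apply_bcontfun (v1 + v2) n) \<le> ssup v1 + ssup v2" .
  qed
  then have "ssup (v1 + v2) - (w1 + w2) \<le> (ssup v1 - w1) + (ssup v2 - w2)"
    by (simp add: algebra_simps)
  also have "\<dots> \<le> sup (ssup v1 - w1) 0 + sup (ssup v2 - w2) 0" by (intro add_mono sup_ge1)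
  finally have le1: "sup (ssup (v1 + v2) - (w1 + w2)) 0 \<le> sup (ssup v1 - w1) 0 + sup (ssup v2 - w2) 0"
    by (rule sup_least) (simp add: add_nonneg_nonneg)
  have "norm (sup (ssup (v1 + v2) - (w1 + w2)) 0) \<le> norm (sup (ssup v1 - w1) 0 + sup (ssup v2 - w2) 0)"
    by (rule norm_mono_pos[OF sup_ge2 le1])
  also have "\<dots> \<le> norm (sup (ssup v1 - w1) 0) + norm (sup (ssup v2 - w2) 0)" by (rule norm_triangle_ineq)
  finally show ?thesis unfolding xy pp_def using A0
    by (simp add: distrib_left[symmetric] mult_left_mono)
qed

lemma pp_hom: "x \<in> EE \<Longrightarrow> c > 0 \<Longrightarrow> pp (c *\<^sub>R x) \<le> c * pp x"
proof -
  assume x: "x \<in> EE" and c: "c > 0"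
  obtain v w where xv: "x = (v, w)" by fastforce
  have f: "fsupp v" using x xv unfolding EE_def by auto
  have "ssup (c *\<^sub>R v) \<le> c *\<^sub>R ssup v"
  proof (rule ssup_le[OF fsupp_scale[OF f]])
    show "0 \<le> c *\<^sub>R ssup v" using c ssup_nonneg[OF f] by (intro scaleR_nonneg_nonneg) simp_all
    fix n
    have "labs (apply_bcontfun (c *\<^sub>R v) n) \<le> c *\<^sub>R labs (apply_bcontfun v n)"
      using labs_scale_pos[of c] c by simp
    also have "\<dots> \<le> c *\<^sub>R ssup v" using ssup_upper[OF f] c by (intro scaleR_left_mono) simp_all
    finally show "labs (apply_bcontfun (c *\<^sub>R v) n) \<le> c *\<^sub>R ssup v" .
  qed
  then have "ssup (c *\<^sub>R v) - c *\<^sub>R w \<le> c *\<^sub>R (ssup v - w)" by (simp add: scaleR_diff_right)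
  also have "\<dots> \<le> c *\<^sub>R sup (ssup v - w) 0" using c by (intro scaleR_left_mono) simp_all
  finally have le1: "sup (ssup (c *\<^sub>R v) - c *\<^sub>R w) 0 \<le> c *\<^sub>R sup (ssup v - w) 0"
    by (rule sup_least) (use c in \<open>auto intro!: scaleR_nonneg_nonneg\<close>)
  have "norm (sup (ssup (c *\<^sub>R v) - c *\<^sub>R w) 0) \<le> norm (c *\<^sub>R sup (ssup v - w) 0)"
    by (rule norm_mono_pos[OF sup_ge2 le1])
  also have "\<dots> = c * norm (sup (ssup v - w) 0)" using c by simp
  finally have "A * norm (sup (ssup (c *\<^sub>R v) - c *\<^sub>R w) 0) \<le> A * (c * norm (sup (ssup v - w) 0))"
    using A0 by (rule mult_left_mono)
  then show ?thesis unfolding xv pp_def by (simp add: mult.left_commute)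
qed

lemma ff_fin: "x \<in> FF \<Longrightarrow> \<forall>n\<ge>N. apply_bcontfun (fst x) n = 0 \<Longrightarrow> ff x = (\<Sum>n<N. T (apply_bcontfun (fst x) n) n)"
  unfolding ff_def by (rule fs_suminf) (simp add: T_zero)

lemma FF_supp: "x \<in> FF \<Longrightarrow> \<exists>N. \<forall>n\<ge>N. apply_bcontfun (fst x) n = 0"
  unfolding FF_def fsupp_def by blast

lemma FF_rJ: "x \<in> FF \<Longrightarrow> apply_bcontfun (fst x) n \<in> range J"
  unfolding FF_def by blast

lemma ff_add: "x \<in> FF \<Longrightarrow> y \<in> FF \<Longrightarrow> ff (x + y) = ff x + ff y"
proof -
  assume x: "x \<in> FF" and y: "y \<in> FF"
  obtain N1 N2 where N1: "\<forall>n\<ge>N1. apply_bcontfun (fst x) n = 0" and N2: "\<forall>n\<ge>N2. apply_bcontfun (fst y) n = 0"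
    using FF_supp[OF x] FF_supp[OF y] by blast
  define N where "N = max N1 N2"
  have xy: "x + y \<in> FF" using FF_sub x y unfolding subspace_def by blast
  have "ff (x + y) = (\<Sum>n<N. T (apply_bcontfun (fst (x + y)) n) n)"
    by (rule ff_fin[OF xy]) (use N1 N2 in \<open>auto simp: N_def\<close>)
  also have "\<dots> = (\<Sum>n<N. T (apply_bcontfun (fst x) n) n + T (apply_bcontfun (fst y) n) n)"
    using T_add_rJ[OF FF_rJ[OF x] FF_rJ[OF y]] by simp
  also have "\<dots> = ff x + ff y"
    by (simp add: sum.distrib ff_fin[OF x, of N] ff_fin[OF y, of N] N1 N2 N_def)
  finally show ?thesis .
qed

lemma ff_hom: "x \<in> FF \<Longrightarrow> ff (c *\<^sub>R x) = c * ff x"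
proof -
  assume x: "x \<in> FF"
  obtain N where N: "\<forall>n\<ge>N. apply_bcontfun (fst x) n = 0" using FF_supp[OF x] by blast
  have cx: "c *\<^sub>R x \<in> FF" using FF_sub x unfolding subspace_def by blast
  have "ff (c *\<^sub>R x) = (\<Sum>n<N. T (apply_bcontfun (fst (c *\<^sub>R x)) n) n)"
    by (rule ff_fin[OF cx]) (use N in auto)
  also have "\<dots> = (\<Sum>n<N. c * T (apply_bcontfun (fst x) n) n)"
    using T_scale_rJ[OF FF_rJ[OF x]] by simp
  also have "\<dots> = c * ff x" by (simp add: sum_distrib_left ff_fin[OF x N])
  finally show ?thesis .
qed

lemma ff_pp: "x \<in> FF \<Longrightarrow> ff x \<le> pp x"
proof -
  assume x: "x \<in> FF"
  obtain v where xv: "x = (v, 0)" using x unfolding FF_def by (cases x) auto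
  obtain N0 where N0: "\<forall>n\<ge>N0. apply_bcontfun v n = 0" using FF_supp[OF x] xv by auto
  define N where "N = Suc N0"
  have N1: "N \<ge> 1" and N: "\<forall>n\<ge>N. apply_bcontfun v n = 0" using N0 unfolding N_def by auto
  have vr: "apply_bcontfun v n \<in> range J" for n using FF_rJ[OF x] xv by auto
  define xs where "xs n = (SOME a. J a = apply_bcontfun v n)" for n
  have xs: "J (xs n) = apply_bcontfun v n" for n
    unfolding xs_def using vr[of n] by (metis (mono_tags) rangeE someI_ex)
  define l where "l = map (\<lambda>j. (unit_vec j, xs j)) [0..<N]"
  have tl: "tensor l = (\<lambda>n. if n < N then xs n else 0)" unfolding l_def by (rule tensor_units)
  have "(\<lambda>n. T (J (tensor l n)) n) = (\<lambda>n. T (apply_bcontfun v n) n)"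
    using N by (auto simp: tl xs J_zero T_zero)
  then have "(\<lambda>n. T (apply_bcontfun v n) n) sums tpair (T \<circ> J) l"
    using tpair_sums[OF J_lin T_op, of l] by simp
  then have "ff x = tpair (T \<circ> J) l" unfolding ff_def xv by (simp add: sums_unique[symmetric])
  also have "\<dots> \<le> A * \<alpha> (tensor l)" using A_bound[of l] by simp
  also have "\<alpha> (tensor l) = norm (Sup_fin ((\<lambda>j. labs (J (xs j))) ` {..<N}))"
    unfolding l_def by (rule J_alpha[OF N1, symmetric])
  also have "\<dots> = norm (ssup v)" unfolding xs ssup_eq[OF N1 N] ..
  also have "ssup v = sup (ssup (fst x) - snd x) 0"
    using ssup_nonneg[of v] N unfolding xv fsupp_def by (auto intro: sup_absorb1[symmetric])
  finally show ?thesis unfolding pp_def .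
qed

lemma HB_g: "\<exists>g. (\<forall>x\<in>FF. g x = ff x) \<and> (\<forall>x\<in>EE. g x \<le> pp x) \<and>
           (\<forall>x\<in>EE. \<forall>y\<in>EE. g (x + y) = g x + g y) \<and> (\<forall>x\<in>EE. \<forall>c. g (c *\<^sub>R x) = c * g x)"
  by (rule hahn_banach[OF EE_sub FF_sub FF_EE pp_add pp_hom ff_add ff_hom ff_pp]) auto


lemma main_exists:
  "\<exists>T'. l1_op UNIV T' \<and> (\<forall>u\<in>range J. T' u = T u) \<and>
           dual_order_bounded (l1_adjoint T') \<and>
           dual_mnorm (l1_adjoint T') = alpha_dual \<alpha> (T \<circ> J)"
proof -
  obtain g where gF: "\<forall>x\<in>FF. g x = ff x" and gp: "\<forall>x\<in>EE. g x \<le> pp x"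
    and gadd: "\<forall>x\<in>EE. \<forall>y\<in>EE. g (x + y) = g x + g y" and ghom: "\<forall>x\<in>EE. \<forall>c. g (c *\<^sub>R x) = c * g x"
    using HB_g by blast
  have EE_I: "(v, w) \<in> EE" if "fsupp v" for v w using that unfolding EE_def by simp
  have gadd': "g (u + v, a + b) = g (u, a) + g (v, b)" if "fsupp u" "fsupp v" for u v a b
    using gadd EE_I[OF that(1), of a] EE_I[OF that(2), of b] by (metis add_Pair)
  have ghom': "g (c *\<^sub>R u, c *\<^sub>R a) = c * g (u, a)" if "fsupp u" for u c a
    using ghom EE_I[OF that, of a] by (metis scaleR_Pair)
  define \<phi> where "\<phi> n a = g (dlt n a, 0)" for n a
  define z where "z w = - g (0, w)" for w
  define T' where "T' a = (\<lambda>n. \<phi> n a)" for a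
  have dlt_add: "dlt n (a + b) = dlt n a + dlt n b" for n and a b :: 'l
    by (rule bcontfun_eqI) (simp add: dlt_apply)
  have dlt_scale: "dlt n (c *\<^sub>R a) = c *\<^sub>R dlt n a" for n c and a :: 'l
    by (rule bcontfun_eqI) (simp add: dlt_apply)
  have phi_add: "\<phi> n (a + b) = \<phi> n a + \<phi> n b" for n a b
    unfolding \<phi>_def dlt_add using gadd'[of "dlt n a" "dlt n b" 0 0, OF fsupp_dlt fsupp_dlt] by simp
  have phi_scale: "\<phi> n (c *\<^sub>R a) = c * \<phi> n a" for n c a
    unfolding \<phi>_def dlt_scale using ghom'[of "dlt n a" c 0, OF fsupp_dlt] by simp
  have phi_neg: "\<phi> n (- a) = - \<phi> n a" for n a
    using phi_scale[of n "-1" a] by simp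
  have EE0: "(0, w) \<in> EE" for w using EE_I[OF fsupp_0] by simp
  have g00: "g (0, 0) = 0"
    using ghom'[of 0 0 0, OF fsupp_0] by simp
  have gsum: "g (fsv N v, 0) = (\<Sum>n<N. \<phi> n (v n))" for N v
  proof (induction N)
    case 0
    have "fsv 0 v = 0" by (rule bcontfun_eqI) (simp add: fsv_apply)
    then show ?case using g00 by simp
  next
    case (Suc N)
    have "fsv (Suc N) v = fsv N v + dlt N (v N)"
      by (rule bcontfun_eqI) (auto simp: fsv_apply dlt_apply less_Suc_eq)
    then have "g (fsv (Suc N) v, 0) = g (fsv N v, 0) + \<phi> N (v N)"
      unfolding \<phi>_def using gadd'[of "fsv N v" "dlt N (v N)" 0 0, OF fsupp_fsv fsupp_dlt] by simp
    then show ?case using Suc by simp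
  qed
  have zneg: "g (0, - w) = z w" for w
    unfolding z_def using ghom'[of 0 "-1" w, OF fsupp_0] by simp
  have P2: "(\<Sum>n<N. \<phi> n (v n)) \<le> z w" if w0: "0 \<le> w" and vw: "\<forall>n<N. labs (v n) \<le> w" for N v w
  proof -
    have "g (fsv N v, 0) = g (fsv N v, w) + g (0, - w)"
      using gadd'[of "fsv N v" 0 w "- w", OF fsupp_fsv fsupp_0] by simp
    also have "g (0, - w) = z w" by (rule zneg)
    also have "g (fsv N v, w) \<le> 0"
    proof -
      have "ssup (fsv N v) \<le> w"
      proof (rule ssup_le[OF fsupp_fsv w0])
        fix n show "labs (apply_bcontfun (fsv N v) n) \<le> w"
          using vw w0 by (simp add: fsv_apply)
      qed
      then have "sup (ssup (fst (fsv N v, w)) - snd (fsv N v, w)) 0 = 0"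
        by (intro sup_absorb2) simp
      then have "pp (fsv N v, w) = 0" unfolding pp_def by simp
      then show ?thesis using gp EE_I[OF fsupp_fsv] by metis
    qed
    finally show ?thesis using gsum by simp
  qed
  have zpos: "0 \<le> z w" if "0 \<le> w" for w using P2[OF that, of 0] by simp
  have ssup0: "ssup (0::nat \<Rightarrow>\<^sub>C 'l) = 0"
    by (rule antisym[OF ssup_le[OF fsupp_0] ssup_nonneg[OF fsupp_0]]) simp_all
  have zbnd: "norm (z w) \<le> norm w * A" for w
  proof -
    have "z w \<le> pp (0, - w)" using zneg[of w] gp EE0 by metis
    also have "\<dots> = A * norm (sup w 0)" unfolding pp_def by (simp add: ssup0)
    also have "\<dots> \<le> A * norm w" using norm_pos_part A0 by (rule mult_left_mono)
    finally have 1: "z w \<le> A * norm w" .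
    have "- z w \<le> pp (0, w)" unfolding z_def using gp EE0 by simp
    also have "\<dots> = A * norm (sup (- w) 0)" unfolding pp_def by (simp add: ssup0)
    also have "\<dots> \<le> A * norm (- w)" using norm_pos_part A0 by (rule mult_left_mono)
    finally have 2: "- z w \<le> A * norm w" by simp
    show ?thesis using 1 2 by (simp add: mult.commute)
  qed
  have zadd: "z (a + b) = z a + z b" for a b
    unfolding z_def using gadd'[of 0 0 a b, OF fsupp_0 fsupp_0] by simp
  have zscale: "z (c *\<^sub>R a) = c *\<^sub>R z a" for c a
    unfolding z_def using ghom'[of 0 c a, OF fsupp_0] by simp
  have zbl: "bounded_linear z" by (rule bounded_linear_intro[OF zadd zscale zbnd])
  have zon: "onorm z \<le> A" using A0 zbnd by (intro onorm_bound) (simp_all add: mult.commute)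
  have phiJ: "\<phi> n (J a) = T (J a) n" for n a
  proof -
    have mem: "(dlt n (J a), 0) \<in> FF"
      unfolding FF_def using fsupp_dlt rJ_0 by (auto simp: dlt_apply)
    have "(\<lambda>m. T (apply_bcontfun (dlt n (J a)) m) m) = (\<lambda>m. if m = n then T (J a) n else 0)"
      by (auto simp: dlt_apply T_zero)
    then have "ff (dlt n (J a), 0) = T (J a) n" unfolding ff_def
      using sums_single[of n "\<lambda>_. T (J a) n"] sums_unique by (metis fst_conv)
    then show ?thesis unfolding \<phi>_def using gF mem by simp
  qed
  have absum: "(\<Sum>n<N. \<bar>\<phi> n a\<bar>) \<le> z (labs a)" for N a
  proof -
    define v where "v n = (if 0 \<le> \<phi> n a then a else - a)" for n
    have "(\<Sum>n<N. \<bar>\<phi> n a\<bar>) = (\<Sum>n<N. \<phi> n (v n))"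
      by (rule sum.cong) (auto simp: v_def phi_neg)
    also have "\<dots> \<le> z (labs a)"
      by (rule P2[OF labs_nonneg]) (simp add: v_def)
    finally show ?thesis .
  qed
  have T'sum: "summable (\<lambda>n. \<bar>T' a n\<bar>)" for a
    unfolding T'_def by (rule summableI_nonneg_bounded[OF _ absum]) simp
  have T'op: "l1_op UNIV T'"
    unfolding l1_op_def
  proof (intro conjI ballI allI)
    fix u show "summable (\<lambda>n. \<bar>T' u n\<bar>)" by (rule T'sum)
  next
    fix u v a b
    show "T' (a *\<^sub>R u + b *\<^sub>R v) = (\<lambda>n. a * T' u n + b * T' v n)"
      unfolding T'_def by (simp add: phi_add phi_scale)
  next
    show "\<exists>C. \<forall>u\<in>UNIV. l1norm (T' u) \<le> C * norm u"
    proof (intro exI[of _ A] ballI)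
      fix u
      have "l1norm (T' u) \<le> z (labs u)"
        unfolding l1norm_def by (rule suminf_le_const[OF T'sum]) (simp add: T'_def absum)
      also have "\<dots> \<le> A * norm u" using zbnd[of "labs u"] by (simp add: mult.commute)
      finally show "l1norm (T' u) \<le> A * norm u" .
    qed
  qed
  have ext: "\<forall>u\<in>range J. T' u = T u" unfolding T'_def using phiJ by auto
  have mj: "dual_ob_majorant (l1_adjoint T') z"
    unfolding dual_ob_majorant_def dual_space_def dual_le_def
  proof (intro conjI allI impI)
    show "z \<in> {z. bounded_linear z}" using zbl by simp
  next
    fix w :: 'l assume "0 \<le> w" then show "0 \<le> z w" by (rule zpos)
  next
    fix h and w :: 'l assume w0: "0 \<le> w"
    have "dual_abs (l1_adjoint T' h) w = dual_abs_pos (l1_adjoint T' h) w"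
      by (rule dual_abs_eq[of w "l1_adjoint T' h", OF w0 adj_0[OF T'op]])
    also have "\<dots> \<le> norm h * z w"
    proof (rule dap_least[OF w0])
      fix u assume uw: "labs u \<le> w"
      have sm: "summable (\<lambda>n. apply_bcontfun h n * T' u n)" by (rule bcf_mult_summable(1)[OF T'sum])
      show "l1_adjoint T' h u \<le> norm h * z w"
        unfolding l1_adjoint_def
      proof (rule suminf_le_const[OF sm])
        fix N
        show "(\<Sum>n<N. apply_bcontfun h n * T' u n) \<le> norm h * z w"
        proof (cases "norm h = 0")
          case True
          then have "h = 0" by simp
          then show ?thesis using True by simp
        next
          case False
          define nh where "nh = norm h"
          have nh0: "nh > 0" using False unfolding nh_def by simp
          define v where "v n = (apply_bcontfun h n / nh) *\<^sub>R u" for n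
          have eqn: "apply_bcontfun h n * T' u n = nh * \<phi> n (v n)" for n
          proof -
            have 1: "\<phi> n (v n) = (apply_bcontfun h n / nh) * \<phi> n u" unfolding v_def by (rule phi_scale)
            have 2: "T' u n = \<phi> n u" unfolding T'_def by (rule refl)
            have 3: "nh * ((apply_bcontfun h n / nh) * \<phi> n u) = apply_bcontfun h n * \<phi> n u"
              using nh0 by simp
            show ?thesis unfolding 1 2 3 by (rule refl)
          qed
          have vw: "\<forall>n<N. labs (v n) \<le> w"
          proof (intro allI impI)
            fix n
            have "norm (apply_bcontfun h n) \<le> norm h" by (rule norm_bounded)
            then have a1: "\<bar>apply_bcontfun h n\<bar> \<le> nh" unfolding nh_def by simp
            have "\<bar>apply_bcontfun h n / nh\<bar> = \<bar>apply_bcontfun h n\<bar> / nh" using nh0 by (simp add: abs_divide)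
            also have "\<dots> \<le> 1" using a1 nh0 by (simp add: divide_le_eq)
            finally have "\<bar>apply_bcontfun h n / nh\<bar> \<le> 1" .
            then show "labs (v n) \<le> w" unfolding v_def using uw by (rule labs_scale_le)
          qed
          have "(\<Sum>n<N. apply_bcontfun h n * T' u n) = (\<Sum>n<N. nh * \<phi> n (v n))"
            using eqn by (rule sum.cong[OF refl])
          also have "\<dots> = nh * (\<Sum>n<N. \<phi> n (v n))" by (rule sum_distrib_left[symmetric])
          also have "\<dots> \<le> nh * z w"
            using P2[OF w0 vw] nh0 by (intro mult_left_mono) simp_all
          finally have "(\<Sum>n<N. apply_bcontfun h n * T' u n) \<le> nh * z w" .
          then show ?thesis unfolding nh_def .
        qed
      qed
    qed
    finally show "dual_abs (l1_adjoint T' h) w \<le> norm h * z w" .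
  qed
  define M where "M = {onorm z' |z'. dual_ob_majorant (l1_adjoint T') z'}"
  have zM: "onorm z \<in> M" unfolding M_def using mj by blast
  have Mge: "alpha_dual \<alpha> (T \<circ> J) \<le> m" if mM: "m \<in> M" for m
  proof -
    obtain z' where z': "m = onorm z'" "dual_ob_majorant (l1_adjoint T') z'" using mM unfolding M_def by blast
    have "bounded_linear z'" using z'(2) unfolding dual_ob_majorant_def dual_space_def by blast
    then have "0 \<le> onorm z'" by (rule onorm_pos_le)
    note nn = this
    have lb: "\<bar>tpair (T \<circ> J) l\<bar> \<le> onorm z' * \<alpha> (tensor l)" for l
      by (rule lower_bound[OF alpha J_lin J_alpha T_op T'op ext z'(2)])
    show ?thesis unfolding z'(1)
      by (rule alpha_dual_le[OF alpha J_lin J_alpha T_op lb nn])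
  qed
  have M0: "0 \<le> m" if "m \<in> M" for m
  proof -
    have "0 \<le> alpha_dual \<alpha> (T \<circ> J)" using A0 unfolding A_def .
    also have "\<dots> \<le> m" using Mge[OF that] .
    finally show ?thesis .
  qed
  have bddM: "bdd_below M" by (rule bdd_belowI[of M 0]) (rule M0)
  have "Inf M \<le> onorm z" by (rule cInf_lower[OF zM bddM])
  also have "\<dots> \<le> alpha_dual \<alpha> (T \<circ> J)" using zon unfolding A_def .
  finally have le: "Inf M \<le> alpha_dual \<alpha> (T \<circ> J)" .
  have Mne: "M \<noteq> {}" using zM by blast
  have ge: "alpha_dual \<alpha> (T \<circ> J) \<le> Inf M" by (rule cInf_greatest[OF Mne Mge])
  show ?thesis
  proof (intro exI[of _ T'] conjI)
    show "l1_op UNIV T'" by (rule T'op)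
    show "\<forall>u\<in>range J. T' u = T u" by (rule ext)
    show "dual_order_bounded (l1_adjoint T')" unfolding dual_order_bounded_def using mj by blast
    show "dual_mnorm (l1_adjoint T') = alpha_dual \<alpha> (T \<circ> J)"
      unfolding dual_mnorm_def M_def[symmetric] using le ge by simp
  qed
qed

end



theorem corollary1p9:
  fixes \<alpha> :: "(nat \<Rightarrow> 'x::banach) \<Rightarrow> real"
    and J :: "'x \<Rightarrow> 'l::banach_lattice"
    and T :: "'l \<Rightarrow> nat \<Rightarrow> real"
  assumes alpha: "left_tensorial \<alpha>"
    and J_lin: "linear J"
    and J_iso: "\<And>x. norm (J x) = norm x"
    and J_alpha: "\<And>k (y :: nat \<Rightarrow> 'x). k \<ge> 1 \<Longrightarrow>
        norm (Sup_fin ((\<lambda>j. labs (J (y j))) ` {..<k}))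
          = \<alpha> (tensor (map (\<lambda>j. (unit_vec j, y j)) [0..<k]))"
    and T_op: "l1_op (range J) T"
    and TJ_dual: "in_alpha_dual \<alpha> (T \<circ> J)"
  shows "\<exists>T'. l1_op UNIV T' \<and> (\<forall>u\<in>range J. T' u = T u) \<and>
           dual_order_bounded (l1_adjoint T') \<and>
           dual_mnorm (l1_adjoint T') = alpha_dual \<alpha> (T \<circ> J)"
  using main_exists[OF alpha J_lin J_iso J_alpha T_op TJ_dual] .

end
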